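(* Let $a,b,c,d$ be nonnegative integers with $\min\{b,c\}=3$ and $\max\{a,d\}\leq 2$, and let $m\geq 4$ satisfy $2^{m-2}\geq(\max\{b,c\}-1)m^2$. Then $$\mathrm{forb}(m,3,F(a,b,c,d))=\mathrm{forb}(m,3,3\cdot I_2)=\mathrm{forb}(m,3,3\cdot K_2)-1.$$
   Context: An $s$-matrix has entries in $\{0,\dots,s-1\}$; simple means no repeated columns. $F\prec A$ means some submatrix of $A$ is a row/column permutation of $F$. $\mathrm{forb}(m,s,F)$ is the maximum number of columns of an $m$-rowed simple $s$-matrix $A$ with $F\not\prec A$. $F(a,b,c,d)$ is the 2-rowed $(0,1)$-matrix with $a$ columns $\binom00$, $b$ columns $\binom10$, $c$ columns $\binom01$, $d$ columns $\binom11$. $K_2$ is the $2\times4$ matrix of all $(0,1)$-columns of length 2, $I_2$ the $2\times2$ identity matrix, and $p\cdot F$ the concatenation of $p$ copies of $F$. *)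

theory Defs
  imports Main
begin

text \<open>A column of an m-rowed s-matrix is a list of length m with entries in {0..<s}.
  A simple m-rowed s-matrix (no repeated columns, column order irrelevant)
  is a set of such columns; its number of columns is the cardinality.\<close>

definition cols :: "nat \<Rightarrow> nat \<Rightarrow> nat list set" where
  "cols m s = {x. length x = m \<and> set x \<subseteq> {0..<s}}"

text \<open>A k-rowed matrix F (possibly with repeated columns) is a list of columns,
  each of length k.\<close>

definition config :: "nat \<Rightarrow> nat list list \<Rightarrow> nat \<Rightarrow> nat list set \<Rightarrow> bool" where
  "config k F m A \<longleftrightarrow>
     (\<exists>\<rho> \<gamma>. inj_on \<rho> {0..<k} \<and> \<rho> ` {0..<k} \<subseteq> {0..<m} \<and>
            inj_on \<gamma> {0..<length F} \<and> \<gamma> ` {0..<length F} \<subseteq> A \<and>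
            (\<forall>j<length F. \<forall>i<k. (\<gamma> j) ! (\<rho> i) = (F ! j) ! i))"

definition forb :: "nat \<Rightarrow> nat \<Rightarrow> nat \<Rightarrow> nat list list \<Rightarrow> nat" where
  "forb m s k F = Max {card A | A. A \<subseteq> cols m s \<and> \<not> config k F m A}"

definition Fabcd :: "nat \<Rightarrow> nat \<Rightarrow> nat \<Rightarrow> nat \<Rightarrow> nat list list" where
  "Fabcd a b c d = replicate a [0,0] @ replicate b [1,0] @ replicate c [0,1] @ replicate d [1,1]"

definition I2 :: "nat list list" where
  "I2 = [[1,0],[0,1]]"

definition K2 :: "nat list list" where
  "K2 = [[0,0],[1,0],[0,1],[1,1]]"

definition copies :: "nat \<Rightarrow> nat list list \<Rightarrow> nat list list" where
  "copies p F = concat (replicate p F)"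

end

theory Submission
  imports Defs
begin

lemma cols_finite: "finite (cols m s)"
proof -
  have "cols m s = {xs. set xs \<subseteq> {0..<s} \<and> length xs = m}" unfolding cols_def by auto
  then show ?thesis using finite_lists_length_eq[of "{0..<s}" m] by simp
qed

lemma cols_nth: "x \<in> cols m s \<Longrightarrow> i < m \<Longrightarrow> x ! i < s"
  unfolding cols_def by (auto intro: nth_mem dest!: subsetD[of "set x" "{0..<s}" "x ! i"])

definition ins :: "nat \<Rightarrow> nat \<Rightarrow> nat list \<Rightarrow> nat list" where
  "ins r v t = take r t @ v # drop r t"

lemma ins_length[simp]: "r \<le> length t \<Longrightarrow> length (ins r v t) = Suc (length t)"
  unfolding ins_def by simp

lemma nth_ins: "r \<le> length t \<Longrightarrow> ins r v t ! i = (if i < r then t ! i else if i = r then v else t ! (i - 1))"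
  unfolding ins_def
  by (auto simp: nth_append min_def nth_Cons' nth_take)

lemma ins_inj: "r \<le> length t \<Longrightarrow> r \<le> length t' \<Longrightarrow> ins r v t = ins r v t' \<Longrightarrow> t = t'"
proof -
  assume a: "r \<le> length t" "r \<le> length t'" "ins r v t = ins r v t'"
  have "take r (ins r v t) = take r t" "drop (Suc r) (ins r v t) = drop r t"
    using a(1) unfolding ins_def by (simp_all add: min_def)
  moreover have "take r (ins r v t') = take r t'" "drop (Suc r) (ins r v t') = drop r t'"
    using a(2) unfolding ins_def by (simp_all add: min_def)
  ultimately have "take r t = take r t'" "drop r t = drop r t'" using a(3) by metis+
  then show "t = t'" by (metis append_take_drop_id)
qed

lemma ins_cols: "t \<in> cols n s \<Longrightarrow> r \<le> n \<Longrightarrow> v < s \<Longrightarrow> ins r v t \<in> cols (Suc n) s"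
  unfolding cols_def ins_def by (auto dest: in_set_takeD in_set_dropD)

definition fib :: "nat \<Rightarrow> nat \<Rightarrow> nat \<Rightarrow> nat list set \<Rightarrow> nat list set" where
  "fib n r v A = {t \<in> cols n 3. ins r v t \<in> A}"

lemma fib_card: assumes "A \<subseteq> cols (Suc n) 3" "r \<le> n"
  shows "card {x \<in> A. x ! r = v} = card (fib n r v A)"
proof -
  have "bij_betw (ins r v) (fib n r v A) {x \<in> A. x ! r = v}"
    unfolding bij_betw_def
  proof
    show "inj_on (ins r v) (fib n r v A)"
      by (rule inj_onI) (use assms ins_inj in \<open>auto simp: fib_def cols_def\<close>)
    show "ins r v ` fib n r v A = {x \<in> A. x ! r = v}"
    proof
      show "ins r v ` fib n r v A \<subseteq> {x \<in> A. x ! r = v}"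
        using assms by (auto simp: fib_def cols_def nth_ins)
    next
      show "{x \<in> A. x ! r = v} \<subseteq> ins r v ` fib n r v A"
      proof
        fix x assume x: "x \<in> {x \<in> A. x ! r = v}"
        then have lx: "length x = Suc n" and sx: "set x \<subseteq> {0..<3}" using assms by (auto simp: cols_def)
        define t where "t = take r x @ drop (Suc r) x"
        have rl: "r < length x" using lx assms by simp
        have "take r t = take r x" "drop r t = drop (Suc r) x" using rl unfolding t_def by (simp_all add: min_def)
        then have "ins r v t = take r x @ x ! r # drop (Suc r) x" using x unfolding ins_def by simp
        then have "x = ins r v t" using id_take_nth_drop[OF rl] by simp
        moreover have "t \<in> cols n 3" using lx sx assms unfolding t_def cols_def
          by (auto dest: in_set_takeD in_set_dropD)
        ultimately show "x \<in> ins r v ` fib n r v A" using x by (auto simp: fib_def)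
      qed
    qed
  qed
  then show ?thesis by (simp add: bij_betw_same_card)
qed

lemma row_split: assumes "A \<subseteq> cols (Suc n) 3" "r \<le> n"
  shows "card A = card (fib n r 0 A) + card (fib n r 1 A) + card (fib n r 2 A)"
proof -
  have fA: "finite A" using assms cols_finite finite_subset by blast
  have "A = {x \<in> A. x ! r = 0} \<union> {x \<in> A. x ! r = 1} \<union> {x \<in> A. x ! r = 2}"
    using assms cols_nth[of _ "Suc n" 3 r] by force
  then have "card A = card ({x \<in> A. x ! r = 0} \<union> {x \<in> A. x ! r = 1} \<union> {x \<in> A. x ! r = 2})" by simp
  also have "\<dots> = card {x \<in> A. x ! r = 0} + card {x \<in> A. x ! r = 1} + card {x \<in> A. x ! r = 2}"
    using fA by (subst card_Un_disjoint, auto)+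
  finally show ?thesis using fib_card[OF assms] by simp
qed

definition sh :: "nat \<Rightarrow> nat \<Rightarrow> nat" where "sh r i = (if i < r then i else Suc i)"

lemma fib_nth: "t \<in> fib n r v A \<Longrightarrow> r \<le> n \<Longrightarrow> ins r v t ! (sh r i) = t ! i"
  unfolding fib_def sh_def cols_def by (auto simp: nth_ins)

lemma sh_less: "i < n \<Longrightarrow> sh r i < Suc n" unfolding sh_def by auto
lemma sh_inj: "sh r i = sh r j \<Longrightarrow> i = j" unfolding sh_def by (auto split: if_splits)
lemma sh_ne: "sh r i \<noteq> r" unfolding sh_def by auto

lemma cols0: "A \<subseteq> cols 0 s \<Longrightarrow> card A \<le> 1"
proof -
  assume "A \<subseteq> cols 0 s"
  then have "A \<subseteq> {[]}" unfolding cols_def by auto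
  then have "card A \<le> card {[]::nat list}" by (intro card_mono) auto
  then show ?thesis by simp
qed

definition RW :: "nat \<Rightarrow> nat list set \<Rightarrow> bool" where
  "RW n D \<longleftrightarrow> D \<subseteq> cols n 3 \<and> (\<forall>i<n. \<not> ((\<exists>x\<in>D. x ! i = 0) \<and> (\<exists>x\<in>D. x ! i = 1)))"

lemma fib_sub: "fib n r v A \<subseteq> cols n 3" unfolding fib_def by auto

lemma RW_fib: assumes "RW (Suc n) D" "r \<le> n" shows "RW n (fib n r v D)"
  unfolding RW_def
proof (intro conjI allI impI fib_sub notI)
  fix i assume i: "i < n" and h: "(\<exists>x\<in>fib n r v D. x ! i = 0) \<and> (\<exists>x\<in>fib n r v D. x ! i = 1)"
  then obtain x y where x: "x \<in> fib n r v D" "x ! i = 0" and y: "y \<in> fib n r v D" "y ! i = 1" by blast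
  have "ins r v x \<in> D" "ins r v y \<in> D" using x y unfolding fib_def by auto
  moreover have "ins r v x ! sh r i = 0" "ins r v y ! sh r i = 1" using fib_nth x y assms(2) by auto
  ultimately show False using assms(1) sh_less[OF i] unfolding RW_def by blast
qed

lemma RW_bound: "RW n D \<Longrightarrow> card D \<le> 2 ^ n"
proof (induction n arbitrary: D)
  case 0
  then show ?case using cols0 unfolding RW_def by auto
next
  case (Suc n)
  have sub: "D \<subseteq> cols (Suc n) 3" using Suc.prems unfolding RW_def by auto
  have cd: "card D = card (fib n 0 0 D) + card (fib n 0 1 D) + card (fib n 0 2 D)"
    using row_split[OF sub] by simp
  have b: "card (fib n 0 v D) \<le> 2 ^ n" for v using Suc.IH[OF RW_fib[OF Suc.prems]] by simp
  have "fib n 0 0 D = {} \<or> fib n 0 1 D = {}"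
  proof (rule ccontr)
    assume "\<not> ?thesis"
    then obtain x y where "x \<in> fib n 0 0 D" "y \<in> fib n 0 1 D" by blast
    then have "ins 0 0 x \<in> D" "ins 0 1 y \<in> D" "ins 0 0 x ! 0 = 0" "ins 0 1 y ! 0 = 1"
      unfolding fib_def ins_def by auto
    then show False using Suc.prems unfolding RW_def by blast
  qed
  then show ?case using cd b[of 0] b[of 1] b[of 2] by auto
qed

lemma RW_bound2: assumes "RW n D" "i0 < n" "\<forall>x\<in>D. x ! i0 = 2" shows "card D \<le> 2 ^ (n - 1)"
proof -
  obtain n' where n: "n = Suc n'" using assms(2) by (cases n) auto
  have sub: "D \<subseteq> cols (Suc n') 3" using assms n unfolding RW_def by auto
  have i0: "i0 \<le> n'" using assms n by simp
  have cd: "card D = card (fib n' i0 0 D) + card (fib n' i0 1 D) + card (fib n' i0 2 D)"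
    using row_split[OF sub i0] by simp
  have e: "fib n' i0 v D = {}" if "v \<noteq> 2" for v
  proof -
    { fix t assume "t \<in> fib n' i0 v D"
      then have "ins i0 v t \<in> D" "ins i0 v t ! i0 = v" unfolding fib_def cols_def using i0 by (auto simp: nth_ins)
      then have False using assms(3) that by auto }
    then show ?thesis by auto
  qed
  have "card (fib n' i0 2 D) \<le> 2 ^ n'" using RW_bound RW_fib assms(1) n i0 by blast
  then show ?thesis using cd e[of 0] e[of 1] n by simp
qed

lemma RW_bound3: assumes "RW n D" "i0 < n" "k0 < n" "i0 \<noteq> k0" "\<forall>x\<in>D. x ! i0 = 2 \<or> x ! k0 = 2"
  shows "2 * card D \<le> 3 * 2 ^ (n - 1)"
proof -
  obtain n' where n: "n = Suc n'" using assms(2) by (cases n) auto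
  have sub: "D \<subseteq> cols (Suc n') 3" using assms n unfolding RW_def by auto
  have i0: "i0 \<le> n'" using assms n by simp
  have cd: "card D = card (fib n' i0 0 D) + card (fib n' i0 1 D) + card (fib n' i0 2 D)"
    using row_split[OF sub i0] by simp
  define k' where "k' = (if k0 < i0 then k0 else k0 - 1)"
  have shk: "sh i0 k' = k0" using assms(4) unfolding k'_def sh_def by auto
  have k': "k' < n'" using assms n unfolding k'_def by auto
  have RWf: "RW n' (fib n' i0 v D)" for v using RW_fib assms(1) n i0 by blast
  have c2: "card (fib n' i0 2 D) \<le> 2 ^ n'" using RW_bound RWf by blast
  have cv: "card (fib n' i0 v D) \<le> 2 ^ (n' - 1)" if "v \<noteq> 2" for v
  proof (rule RW_bound2[OF RWf k'])
    show "\<forall>x\<in>fib n' i0 v D. x ! k' = 2"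
    proof
      fix t assume t: "t \<in> fib n' i0 v D"
      then have "ins i0 v t \<in> D" "ins i0 v t ! i0 = v" unfolding fib_def cols_def using i0 by (auto simp: nth_ins)
      moreover have "ins i0 v t ! k0 = t ! k'" using fib_nth[OF t i0, of k'] shk by simp
      ultimately show "t ! k' = 2" using assms(5) that by force
    qed
  qed
  have "fib n' i0 0 D = {} \<or> fib n' i0 1 D = {}"
  proof (rule ccontr)
    assume "\<not> ?thesis"
    then obtain x y where "x \<in> fib n' i0 0 D" "y \<in> fib n' i0 1 D" by blast
    then have "ins i0 0 x \<in> D" "ins i0 1 y \<in> D" "ins i0 0 x ! i0 = 0" "ins i0 1 y ! i0 = 1"
      unfolding fib_def cols_def using i0 by (auto simp: nth_ins)
    then show False using assms(1,2) unfolding RW_def by blast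
  qed
  then have "card (fib n' i0 0 D) + card (fib n' i0 1 D) \<le> 2 ^ (n' - 1)"
    using cv[of 0] cv[of 1] by auto
  then have "2 * card D \<le> 2 * 2 ^ n' + 2 * 2 ^ (n' - 1)" using cd c2 by simp
  also have "\<dots> = 3 * 2 ^ n'" using k' by (cases n') auto
  finally have "2 * card D \<le> 3 * 2 ^ n'" .
  moreover have "n - 1 = n'" using n by simp
  ultimately show ?thesis by metis
qed

definition Pm :: "nat \<Rightarrow> nat list set \<Rightarrow> bool" where
  "Pm m A \<longleftrightarrow> (\<forall>i<m. \<forall>j<m. i \<noteq> j \<longrightarrow> (\<exists>u<2. \<exists>v<2. \<forall>x\<in>A. \<not> (x ! i = u \<and> x ! j = v)))"

lemma Pm_sub: assumes "Pm (Suc n) A" "r \<le> n" "B \<subseteq> fib n r 0 A \<union> fib n r 1 A \<union> fib n r 2 A"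
  shows "Pm n B"
  unfolding Pm_def
proof (intro allI impI)
  fix i j assume i: "i < n" and j: "j < n" and ij: "i \<noteq> j"
  have "sh r i \<noteq> sh r j" using ij sh_inj by blast
  then obtain u v where uv: "u < 2" "v < 2" "\<forall>x\<in>A. \<not> (x ! sh r i = u \<and> x ! sh r j = v)"
    using assms(1) sh_less[OF i] sh_less[OF j] unfolding Pm_def by blast
  have "\<forall>t\<in>B. \<not> (t ! i = u \<and> t ! j = v)"
  proof
    fix t assume "t \<in> B"
    then obtain w where t: "t \<in> fib n r w A" using assms(3) by blast
    then have "ins r w t \<in> A" unfolding fib_def by auto
    moreover have "ins r w t ! sh r i = t ! i" "ins r w t ! sh r j = t ! j" using fib_nth[OF t assms(2)] by auto
    ultimately show "\<not> (t ! i = u \<and> t ! j = v)" using uv(3) by auto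
  qed
  then show "\<exists>u<2. \<exists>v<2. \<forall>x\<in>B. \<not> (x ! i = u \<and> x ! j = v)" using uv by blast
qed

lemma step: assumes "Pm (Suc n) A" "A \<subseteq> cols (Suc n) 3" "r \<le> n"
  shows "card A \<le> card (fib n r 2 A) + card (fib n r 0 A \<union> fib n r 1 A) + card (fib n r 0 A \<inter> fib n r 1 A)"
    "Pm n (fib n r 2 A)" "Pm n (fib n r 0 A \<union> fib n r 1 A)"
    "RW n (fib n r 0 A \<inter> fib n r 1 A)"
proof -
  have fin: "finite (fib n r v A)" for v by (rule finite_subset[OF fib_sub cols_finite])
  show "card A \<le> card (fib n r 2 A) + card (fib n r 0 A \<union> fib n r 1 A) + card (fib n r 0 A \<inter> fib n r 1 A)"
    using row_split[OF assms(2,3)] card_Un_Int[OF fin[of 0] fin[of 1]] by simp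
  show "Pm n (fib n r 2 A)" "Pm n (fib n r 0 A \<union> fib n r 1 A)"
    by (rule Pm_sub[OF assms(1,3)]; auto)+
  show "RW n (fib n r 0 A \<inter> fib n r 1 A)"
    unfolding RW_def
  proof (intro conjI allI impI notI)
    show "fib n r 0 A \<inter> fib n r 1 A \<subseteq> cols n 3" using fib_sub[of n r 0 A] by auto
  next
    fix i assume i: "i < n" and h: "(\<exists>x\<in>fib n r 0 A \<inter> fib n r 1 A. x ! i = 0) \<and> (\<exists>x\<in>fib n r 0 A \<inter> fib n r 1 A. x ! i = 1)"
    then obtain x y where x: "x \<in> fib n r 0 A" "x \<in> fib n r 1 A" "x ! i = 0"
      and y: "y \<in> fib n r 0 A" "y \<in> fib n r 1 A" "y ! i = 1" by blast
    have ne: "sh r i \<noteq> r" by (rule sh_ne)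
    obtain u v where uv: "u < 2" "v < 2" "\<forall>z\<in>A. \<not> (z ! sh r i = u \<and> z ! r = v)"
    proof -
      have "r < Suc n" using assms(3) by simp
      then show ?thesis using that assms(1) sh_less[OF i] ne unfolding Pm_def by blast
    qed
    have r: "r \<le> length x" "r \<le> length y" using x y assms(3) unfolding fib_def cols_def by auto
    have A: "ins r 0 x \<in> A" "ins r 1 x \<in> A" "ins r 0 y \<in> A" "ins r 1 y \<in> A" using x y unfolding fib_def by auto
    have "ins r 0 x ! sh r i = 0" "ins r 1 x ! sh r i = 0" "ins r 0 y ! sh r i = 1" "ins r 1 y ! sh r i = 1"
      using fib_nth[OF x(1) assms(3)] fib_nth[OF x(2) assms(3)] fib_nth[OF y(1) assms(3)] fib_nth[OF y(2) assms(3)] x(3) y(3) by auto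
    moreover have "ins r 0 x ! r = 0" "ins r 1 x ! r = 1" "ins r 0 y ! r = 0" "ins r 1 y ! r = 1"
      using r by (simp_all add: nth_ins)
    moreover have "u = 0 \<or> u = 1" "v = 0 \<or> v = 1" using uv by auto
    ultimately show False using uv(3) A by fastforce
  qed
qed

lemma Pbound: "Pm m A \<Longrightarrow> A \<subseteq> cols m 3 \<Longrightarrow> 2 * card A \<le> (m + 2) * 2 ^ m"
proof (induction m arbitrary: A)
  case 0
  then have "card A \<le> 1" using cols0 by blast
  then show ?case by simp
next
  case (Suc n)
  note s = step[OF Suc.prems le0]
  have "2 * card (fib n 0 2 A) \<le> (n + 2) * 2 ^ n" using Suc.IH[OF s(2) fib_sub] .
  moreover have "2 * card (fib n 0 0 A \<union> fib n 0 1 A) \<le> (n + 2) * 2 ^ n"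
    using Suc.IH[OF s(3)] fib_sub by (simp add: fib_sub)
  moreover have "card (fib n 0 0 A \<inter> fib n 0 1 A) \<le> 2 ^ n" using RW_bound s(4) by blast
  ultimately show ?case using s(1) by simp
qed

lemma del_bound: assumes "Pm (Suc n) A" "A \<subseteq> cols (Suc n) 3" "r \<le> n"
  shows "2 * card A \<le> 2 * (n + 2) * 2 ^ n + 2 * card (fib n r 0 A \<inter> fib n r 1 A)"
proof -
  note s = step[OF assms]
  have "2 * card (fib n r 2 A) \<le> (n + 2) * 2 ^ n" using Pbound[OF s(2) fib_sub] .
  moreover have "2 * card (fib n r 0 A \<union> fib n r 1 A) \<le> (n + 2) * 2 ^ n"
    using Pbound[OF s(3)] by (simp add: fib_sub)
  ultimately show ?thesis using s(1) by simp
qed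

lemma loss_pair: assumes "Pm m A" "A \<subseteq> cols m 3" "i < m" "j < m" "i \<noteq> j"
  "\<forall>x\<in>A. \<not> (x ! i = 0 \<and> x ! j = 1) \<and> \<not> (x ! i = 1 \<and> x ! j = 0)"
  shows "2 * card A + 2 ^ (m - 1) \<le> (m + 2) * 2 ^ m"
proof -
  obtain n where n: "m = Suc n" using assms(3) by (cases m) auto
  have r: "j \<le> n" using assms(4) n by simp
  define D where "D = fib n j 0 A \<inter> fib n j 1 A"
  have b: "2 * card A \<le> 2 * (n + 2) * 2 ^ n + 2 * card D"
    using del_bound[OF assms(1,2)[unfolded n] r] unfolding D_def .
  define i' where "i' = (if i < j then i else i - 1)"
  have shi: "sh j i' = i" using assms(5) unfolding i'_def sh_def by auto
  have i': "i' < n" using assms(3,4,5,6) n unfolding i'_def by auto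
  have RWD: "RW n D" using step(4)[OF assms(1,2)[unfolded n] r] unfolding D_def .
  have "\<forall>t\<in>D. t ! i' = 2"
  proof
    fix t assume t: "t \<in> D"
    then have t0: "t \<in> fib n j 0 A" and t1: "t \<in> fib n j 1 A" unfolding D_def by auto
    have A: "ins j 0 t \<in> A" "ins j 1 t \<in> A" using t0 t1 unfolding fib_def by auto
    have l: "j \<le> length t" using t0 r unfolding fib_def cols_def by auto
    have "ins j 0 t ! i = t ! i'" "ins j 1 t ! i = t ! i'" using fib_nth[OF t0 r, of i'] fib_nth[OF t1 r, of i'] shi by auto
    moreover have "ins j 0 t ! j = 0" "ins j 1 t ! j = 1" using l by (simp_all add: nth_ins)
    moreover have "t ! i' < 3" using t0 i' unfolding fib_def by (auto intro: cols_nth)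
    then have "t ! i' = 0 \<or> t ! i' = 1 \<or> t ! i' = 2" by arith
    ultimately show "t ! i' = 2" using assms(6) A by force
  qed
  then have "card D \<le> 2 ^ (n - 1)" using RW_bound2[OF RWD i'] by blast
  then have "2 * card A \<le> 2 * (n + 2) * 2 ^ n + 2 * 2 ^ (n - 1)" using b by simp
  moreover have "2 * 2 ^ (n - 1) = (2::nat) ^ n" using i' by (cases n) auto
  moreover have "(m + 2) * 2 ^ m = 2 * (n + 2) * 2 ^ n + 2 * 2 ^ n" "2 ^ (m - 1) = (2::nat) ^ n" using n by simp_all
  ultimately show ?thesis by linarith
qed

lemma loss_cycle: assumes "Pm m A" "A \<subseteq> cols m 3" "i < m" "j < m" "k < m" "i \<noteq> j" "j \<noteq> k" "i \<noteq> k"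
  "\<forall>x\<in>A. \<not> (x ! i = 0 \<and> x ! j = 1)" "\<forall>x\<in>A. \<not> (x ! j = 0 \<and> x ! k = 1)" "\<forall>x\<in>A. \<not> (x ! k = 0 \<and> x ! i = 1)"
  shows "2 * card A < (m + 2) * 2 ^ m"
proof -
  obtain n where n: "m = Suc n" using assms(3) by (cases m) auto
  have r: "j \<le> n" using assms(4) n by simp
  define D where "D = fib n j 0 A \<inter> fib n j 1 A"
  have b: "2 * card A \<le> 2 * (n + 2) * 2 ^ n + 2 * card D"
    using del_bound[OF assms(1,2)[unfolded n] r] unfolding D_def .
  define i' where "i' = (if i < j then i else i - 1)"
  have shi: "sh j i' = i" using assms(6) unfolding i'_def sh_def by auto
  have i': "i' < n" using assms(3,4,5,6) n unfolding i'_def by auto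
  define k' where "k' = (if k < j then k else k - 1)"
  have shk: "sh j k' = k" using assms(7) unfolding k'_def sh_def by auto
  have k': "k' < n" using assms(4,5,7) n unfolding k'_def by auto
  have ik: "i' \<noteq> k'" using shi shk assms(8) by auto
  have RWD: "RW n D" using step(4)[OF assms(1,2)[unfolded n] r] unfolding D_def .
  have "\<forall>t\<in>D. t ! i' = 2 \<or> t ! k' = 2"
  proof
    fix t assume t: "t \<in> D"
    then have t0: "t \<in> fib n j 0 A" and t1: "t \<in> fib n j 1 A" unfolding D_def by auto
    have A: "ins j 0 t \<in> A" "ins j 1 t \<in> A" using t0 t1 unfolding fib_def by auto
    have l: "j \<le> length t" using t0 r unfolding fib_def cols_def by auto
    have "ins j 0 t ! i = t ! i'" "ins j 1 t ! i = t ! i'" using fib_nth[OF t0 r, of i'] fib_nth[OF t1 r, of i'] shi by auto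
    moreover have "ins j 0 t ! k = t ! k'" "ins j 1 t ! k = t ! k'" using fib_nth[OF t0 r, of k'] fib_nth[OF t1 r, of k'] shk by auto
    moreover have "ins j 0 t ! j = 0" "ins j 1 t ! j = 1" using l by (simp_all add: nth_ins)
    moreover have "t ! i' < 3" "t ! k' < 3" using t0 i' k' unfolding fib_def by (auto intro: cols_nth)
    then have "t ! i' = 0 \<or> t ! i' = 1 \<or> t ! i' = 2" "t ! k' = 0 \<or> t ! k' = 1 \<or> t ! k' = 2" by arith+
    ultimately show "t ! i' = 2 \<or> t ! k' = 2" using assms(9-11) A by force
  qed
  then have "2 * card D \<le> 3 * 2 ^ (n - 1)" using RW_bound3[OF RWD i' k' ik] by blast
  then have "2 * card A \<le> 2 * (n + 2) * 2 ^ n + 3 * 2 ^ (n - 1)" using b by simp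
  moreover have "2 * 2 ^ (n - 1) = (2::nat) ^ n" using i' by (cases n) auto
  moreover have "(m + 2) * 2 ^ m = 2 * (n + 2) * 2 ^ n + 2 * 2 ^ n" using n by simp
  moreover have "(0::nat) < 2 ^ (n - 1)" by simp
  ultimately show ?thesis by linarith
qed

definition W :: "nat list set" where "W = {[0,0],[1,0],[0,1],[1,1]}"

definition cntF :: "nat list list \<Rightarrow> nat list \<Rightarrow> nat" where
  "cntF F w = length (filter (\<lambda>v. v = w) F)"

definition PS :: "nat list set \<Rightarrow> nat \<Rightarrow> nat \<Rightarrow> nat list \<Rightarrow> nat list set" where
  "PS A i j w = {x \<in> A. [x ! i, x ! j] = w}"

lemma cntF_card: "cntF F w = card {t. t < length F \<and> F ! t = w}"
  unfolding cntF_def by (simp add: length_filter_conv_card)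

lemma config_imp: assumes "set F \<subseteq> W" "finite A" "config 2 F m A"
  shows "\<exists>i j. i < m \<and> j < m \<and> i \<noteq> j \<and> (\<forall>w\<in>W. cntF F w \<le> card (PS A i j w))"
proof -
  obtain \<rho> \<gamma> where r: "inj_on \<rho> {0..<2}" "\<rho> ` {0..<2} \<subseteq> {0..<m}"
    and g: "inj_on \<gamma> {0..<length F}" "\<gamma> ` {0..<length F} \<subseteq> A"
    and e: "\<forall>j<length F. \<forall>i<2. (\<gamma> j) ! (\<rho> i) = (F ! j) ! i"
    using assms(3) unfolding config_def by (elim exE conjE) (rule that; assumption)
  have i: "\<rho> 0 < m" "\<rho> 1 < m" using r(2) unfolding image_subset_iff by auto
  have ne: "\<rho> 0 \<noteq> \<rho> 1"
  proof
    assume "\<rho> 0 = \<rho> 1"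
    then have "(0::nat) = 1" using inj_onD[OF r(1), of 0 1] by simp
    then show False by simp
  qed
  have "cntF F w \<le> card (PS A (\<rho> 0) (\<rho> 1) w)" if w: "w \<in> W" for w
  proof -
    have "cntF F w = card {t. t < length F \<and> F ! t = w}" by (rule cntF_card)
    also have "\<dots> \<le> card (PS A (\<rho> 0) (\<rho> 1) w)"
    proof (rule card_inj_on_le)
      show "inj_on \<gamma> {t. t < length F \<and> F ! t = w}" using g(1) by (rule inj_on_subset) auto
      show "finite (PS A (\<rho> 0) (\<rho> 1) w)" using assms(2) unfolding PS_def by simp
      show "\<gamma> ` {t. t < length F \<and> F ! t = w} \<subseteq> PS A (\<rho> 0) (\<rho> 1) w"
      proof
        fix x assume "x \<in> \<gamma> ` {t. t < length F \<and> F ! t = w}"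
        then obtain t where t: "t < length F" "F ! t = w" "x = \<gamma> t" by blast
        have "x \<in> A" using g(2) t by auto
        moreover have "F ! t \<in> W" using assms(1) t(1) by (meson nth_mem subsetD)
        then have "F ! t = [F ! t ! 0, F ! t ! 1]" unfolding W_def by auto
        then have "[x ! \<rho> 0, x ! \<rho> 1] = w" using e t by auto
        ultimately show "x \<in> PS A (\<rho> 0) (\<rho> 1) w" unfolding PS_def by auto
      qed
    qed
    finally show ?thesis .
  qed
  then show ?thesis using i ne by blast
qed

lemma imp_config: assumes "set F \<subseteq> W" "finite A" "i < m" "j < m" "i \<noteq> j"
  "\<forall>w\<in>W. cntF F w \<le> card (PS A i j w)"
  shows "config 2 F m A"
proof -
  define T where "T w = {t. t < length F \<and> F ! t = w}" for w
  have "\<forall>w\<in>W. \<exists>f. f ` T w \<subseteq> PS A i j w \<and> inj_on f (T w)"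
  proof
    fix w assume w: "w \<in> W"
    show "\<exists>f. f ` T w \<subseteq> PS A i j w \<and> inj_on f (T w)"
    proof (rule card_le_inj)
      show "finite (T w)" unfolding T_def by simp
      show "finite (PS A i j w)" using assms(2) unfolding PS_def by simp
      show "card (T w) \<le> card (PS A i j w)" using assms(6) w unfolding T_def by (simp add: cntF_card)
    qed
  qed
  from bchoice[OF this] obtain g where g: "\<forall>w\<in>W. g w ` T w \<subseteq> PS A i j w \<and> inj_on (g w) (T w)"
    by blast
  define \<gamma> where "\<gamma> t = g (F ! t) t" for t
  define \<rho> where "\<rho> s = (if s = 0 then i else j)" for s :: nat
  have FW: "F ! t \<in> W" if "t < length F" for t using assms(1) that by (meson nth_mem subsetD)
  have gP: "\<gamma> t \<in> PS A i j (F ! t)" if "t < length F" for t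
    using g FW[OF that] that unfolding \<gamma>_def T_def by blast
  show ?thesis unfolding config_def
  proof (intro exI conjI)
    show "inj_on \<rho> {0..<2}" unfolding \<rho>_def inj_on_def using assms(5) by auto
    show "\<rho> ` {0..<2} \<subseteq> {0..<m}" unfolding \<rho>_def using assms(3,4) by auto
    show "inj_on \<gamma> {0..<length F}"
    proof (rule inj_onI)
      fix t t' assume t: "t \<in> {0..<length F}" and t': "t' \<in> {0..<length F}" and eq: "\<gamma> t = \<gamma> t'"
      have "F ! t = F ! t'" using gP[of t] gP[of t'] t t' eq unfolding PS_def by auto
      then have "t' \<in> T (F ! t)" "t \<in> T (F ! t)" using t t' unfolding T_def by auto
      moreover have "inj_on (g (F ! t)) (T (F ! t))" using g FW t by auto
      moreover have "g (F ! t) t = g (F ! t) t'" using eq \<open>F ! t = F ! t'\<close> unfolding \<gamma>_def by simp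
      ultimately show "t = t'" unfolding inj_on_def by blast
    qed
    show "\<gamma> ` {0..<length F} \<subseteq> A" using gP unfolding PS_def by auto
    show "\<forall>t<length F. \<forall>s<2. \<gamma> t ! \<rho> s = F ! t ! s"
    proof (intro allI impI)
      fix t s :: nat assume t: "t < length F" and s: "s < 2"
      have "[\<gamma> t ! i, \<gamma> t ! j] = F ! t" using gP[OF t] unfolding PS_def by auto
      moreover have "s = 0 \<or> s = 1" using s by auto
      ultimately show "\<gamma> t ! \<rho> s = F ! t ! s" unfolding \<rho>_def by (metis nth_Cons_0 nth_Cons_Suc One_nat_def)
    qed
  qed
qed

lemma config_iff: assumes "set F \<subseteq> W" "finite A"
  shows "config 2 F m A \<longleftrightarrow> (\<exists>i j. i < m \<and> j < m \<and> i \<noteq> j \<and> (\<forall>w\<in>W. cntF F w \<le> card (PS A i j w)))"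
  using config_imp[OF assms] imp_config[OF assms] by blast

lemma Fabcd_W: "set (Fabcd a b c d) \<subseteq> W" unfolding Fabcd_def W_def by auto
lemma I2_W: "set (copies 3 I2) \<subseteq> W" unfolding copies_def I2_def W_def by (simp add: numeral_3_eq_3)
lemma K2_W: "set (copies 3 K2) \<subseteq> W" unfolding copies_def K2_def W_def by (simp add: numeral_3_eq_3)

lemma cnt_Fabcd: "cntF (Fabcd a b c d) [0,0] = a" "cntF (Fabcd a b c d) [1,0] = b"
  "cntF (Fabcd a b c d) [0,1] = c" "cntF (Fabcd a b c d) [1,1] = d"
  unfolding cntF_def Fabcd_def by (simp_all add: filter_replicate)

lemma cnt_I2: "cntF (copies 3 I2) [0,0] = 0" "cntF (copies 3 I2) [1,0] = 3"
  "cntF (copies 3 I2) [0,1] = 3" "cntF (copies 3 I2) [1,1] = 0"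
  unfolding cntF_def copies_def I2_def by (simp_all add: numeral_3_eq_3)

lemma cnt_K2: "cntF (copies 3 K2) [0,0] = 3" "cntF (copies 3 K2) [1,0] = 3"
  "cntF (copies 3 K2) [0,1] = 3" "cntF (copies 3 K2) [1,1] = 3"
  unfolding cntF_def copies_def K2_def by (simp_all add: numeral_3_eq_3)

lemma Pm_intro: assumes "\<And>i j. i < j \<Longrightarrow> j < m \<Longrightarrow> \<exists>u<2. \<exists>v<2. \<forall>x\<in>B. \<not> (x ! i = u \<and> x ! j = v)"
  shows "Pm m B"
  unfolding Pm_def
proof (intro allI impI)
  fix i j assume i: "i < m" and j: "j < m" and ij: "i \<noteq> j"
  show "\<exists>u<2. \<exists>v<2. \<forall>x\<in>B. \<not> (x ! i = u \<and> x ! j = v)"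
  proof (cases "i < j")
    case True then show ?thesis using assms j by blast
  next
    case False
    then have "j < i" using ij by simp
    then obtain u v where "u < 2" "v < 2" "\<forall>x\<in>B. \<not> (x ! j = u \<and> x ! i = v)" using assms[of j i] i by blast
    then show ?thesis by blast
  qed
qed

lemma sum_pairs_const: "2 * (\<Sum>j<m. \<Sum>i<j. (h::nat)) = h * (m * (m - 1))"
proof (induction m)
  case 0 then show ?case by simp
next
  case (Suc m)
  have "2 * (\<Sum>j<Suc m. \<Sum>i<j. h) = 2 * (\<Sum>j<m. \<Sum>i<j. h) + 2 * (h * m)" by simp
  also have "\<dots> = h * (m * (m - 1)) + 2 * h * m" using Suc.IH by simp
  also have "\<dots> = h * (Suc m * m)" by (cases m) (simp_all add: algebra_simps)
  finally show ?case by simp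
qed

lemma sum_pairs_le: "(\<And>i j. i < j \<Longrightarrow> j < m \<Longrightarrow> f i j \<le> (h::nat)) \<Longrightarrow>
   2 * (\<Sum>j<m. \<Sum>i<j. f i j) \<le> h * (m * (m - 1))"
proof -
  assume a: "\<And>i j. i < j \<Longrightarrow> j < m \<Longrightarrow> f i j \<le> h"
  have "(\<Sum>j<m. \<Sum>i<j. f i j) \<le> (\<Sum>j<m. \<Sum>i<j. h)"
    by (intro sum_mono) (use a in auto)
  then show ?thesis using sum_pairs_const[where m=m and h=h] by linarith
qed

lemma sum_pairs_le1: assumes "\<And>i j. i < j \<Longrightarrow> j < m \<Longrightarrow> f i j \<le> (2::nat)" "p < q" "q < m" "f p q \<le> 1"
  shows "(\<Sum>j<m. \<Sum>i<j. f i j) + 1 \<le> m * (m - 1)"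
proof -
  define g where "g i j = f i j + (if j = q then (if i = p then 1 else 0) else 0)" for i j
  have "(\<Sum>j<m. \<Sum>i<j. g i j) = (\<Sum>j<m. \<Sum>i<j. f i j) + (\<Sum>j<m. \<Sum>i<j. (if j = q then (if i = p then 1 else 0) else 0))"
    unfolding g_def by (simp add: sum.distrib)
  also have "(\<Sum>j<m. \<Sum>i<j. (if j = q then (if i = p then 1 else (0::nat)) else 0)) = (\<Sum>j<m. (if j = q then (\<Sum>i<j. if i = p then 1 else 0) else 0))"
    by (intro sum.cong) auto
  also have "\<dots> = (\<Sum>i<q. if i = p then 1 else (0::nat))" using assms(3) by (simp add: sum.delta)
  also have "\<dots> = 1" using assms(2) by (simp add: sum.delta)
  finally have e: "(\<Sum>j<m. \<Sum>i<j. g i j) = (\<Sum>j<m. \<Sum>i<j. f i j) + 1" .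
  have "2 * (\<Sum>j<m. \<Sum>i<j. g i j) \<le> 2 * (m * (m - 1))"
    by (rule sum_pairs_le) (use assms in \<open>auto simp: g_def\<close>)
  then show ?thesis using e by linarith
qed

lemma remove_card: assumes "A \<subseteq> cols m 3" "\<And>i j. S i j \<subseteq> A"
  shows "card A \<le> card (A - (\<Union>j<m. \<Union>i<j. S i j)) + (\<Sum>j<m. \<Sum>i<j. card (S i j))"
proof -
  define U where "U = (\<Union>j<m. \<Union>i<j. S i j)"
  have fA: "finite A" using assms(1) cols_finite by (rule finite_subset)
  have fS: "finite (S i j)" for i j using assms(2) fA by (rule finite_subset)
  have "card U \<le> (\<Sum>j<m. card (\<Union>i<j. S i j))" unfolding U_def by (rule card_UN_le) simp
  also have "\<dots> \<le> (\<Sum>j<m. \<Sum>i<j. card (S i j))" by (intro sum_mono card_UN_le) simp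
  finally have cU: "card U \<le> (\<Sum>j<m. \<Sum>i<j. card (S i j))" .
  have "A = (A - U) \<union> (A \<inter> U)" by blast
  then have "card A \<le> card (A - U) + card (A \<inter> U)" by (metis card_Un_le)
  moreover have "finite U" unfolding U_def using fS by simp
  then have "card (A \<inter> U) \<le> card U" by (simp add: card_mono)
  ultimately show ?thesis using cU unfolding U_def by linarith
qed

lemma Pm_W: assumes "\<And>i j. i < j \<Longrightarrow> j < m \<Longrightarrow> \<exists>w\<in>W. \<forall>x\<in>B. [x ! i, x ! j] \<noteq> w"
  shows "Pm m B"
proof (rule Pm_intro)
  fix i j assume "i < j" "j < m"
  then obtain w where w: "w \<in> W" "\<forall>x\<in>B. [x ! i, x ! j] \<noteq> w" using assms by blast
  then obtain u v where "w = [u, v]" "u < 2" "v < 2" unfolding W_def by auto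
  then show "\<exists>u<2. \<exists>v<2. \<forall>x\<in>B. \<not> (x ! i = u \<and> x ! j = v)" using w(2) by auto
qed

lemma sink_exists: fixes R :: "nat \<Rightarrow> nat \<Rightarrow> bool"
  assumes "0 < m" "\<And>i j. i < m \<Longrightarrow> j < m \<Longrightarrow> i \<noteq> j \<Longrightarrow> R i j \<or> R j i"
    "\<And>i j. R i j \<Longrightarrow> \<not> R j i"
    "\<And>i j k. i < m \<Longrightarrow> j < m \<Longrightarrow> k < m \<Longrightarrow> R i j \<Longrightarrow> R j k \<Longrightarrow> R i k"
  shows "\<exists>q<m. \<forall>r<m. r \<noteq> q \<longrightarrow> R r q"
proof -
  define c where "c q = card {r. r < m \<and> R r q}" for q
  obtain q where q: "q < m" "\<forall>q'<m. c q' \<le> c q"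
  proof -
    have "finite (c ` {..<m})" by simp
    moreover have "c ` {..<m} \<noteq> {}" using assms(1) by auto
    ultimately have "Max (c ` {..<m}) \<in> c ` {..<m}" by (rule Max_in)
    then obtain q where "q < m" "c q = Max (c ` {..<m})" by auto
    moreover have "\<forall>q'<m. c q' \<le> Max (c ` {..<m})" by simp
    ultimately show ?thesis using that by auto
  qed
  have "\<forall>r<m. r \<noteq> q \<longrightarrow> R r q"
  proof (intro allI impI, rule ccontr)
    fix r assume r: "r < m" "r \<noteq> q" "\<not> R r q"
    then have qr: "R q r" using assms(2)[of q r] q(1) by blast
    define X where "X = {r'. r' < m \<and> R r' q}"
    define Y where "Y = {r'. r' < m \<and> R r' r}"
    have "insert q X \<subseteq> Y"
    proof
      fix x assume "x \<in> insert q X"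
      then have "x = q \<or> (x < m \<and> R x q)" unfolding X_def by simp
      then show "x \<in> Y"
      proof
        assume "x = q" then show ?thesis using qr q(1) unfolding Y_def by simp
      next
        assume x: "x < m \<and> R x q"
        then have "R x r" using assms(4)[of x q r] q(1) r(1) qr by simp
        then show ?thesis using x unfolding Y_def by simp
      qed
    qed
    moreover have "q \<notin> X" using assms(3) unfolding X_def by blast
    moreover have "finite X" "finite Y" unfolding X_def Y_def by simp_all
    ultimately have "Suc (c q) \<le> c r" unfolding c_def X_def[symmetric] Y_def[symmetric]
      using card_mono[of Y "insert q X"] card_insert_disjoint[of X q] by simp
    then show False using q(2) r(1) by (meson not_less_eq_eq)
  qed
  then show ?thesis using q(1) by blast
qed

lemma PS_swap: "PS A i j [u, v] = PS A j i [v, u]" unfolding PS_def by auto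

lemma PS_sub: "PS A i j w \<subseteq> A" unfolding PS_def by auto

lemma tourn_bound: assumes A: "A \<subseteq> cols m 3" and m2: "2 \<le> m"
  and h: "\<And>i j. i < j \<Longrightarrow> j < m \<Longrightarrow> card (PS A i j [1,0]) \<le> 2 \<or> card (PS A i j [0,1]) \<le> 2"
  shows "2 * card A + 2 \<le> (m + 2) * 2 ^ m + 2 * (m * (m - 1))"
proof -
  define arc where "arc i j \<longleftrightarrow> i \<noteq> j \<and> (if i < j then card (PS A i j [0,1]) \<le> 2 else \<not> card (PS A j i [0,1]) \<le> 2)" for i j
  have arcN: "card (PS A i j [0,1]) \<le> 2" if "arc i j" "i < m" "j < m" for i j
  proof (cases "i < j")
    case True then show ?thesis using that unfolding arc_def by simp
  next
    case False
    then have ji: "j < i" "\<not> card (PS A j i [0,1]) \<le> 2" using that unfolding arc_def by auto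
    then have "card (PS A j i [1,0]) \<le> 2" using h[of j i] that by auto
    then show ?thesis using PS_swap[of A j i 1 0] by simp
  qed
  have total: "arc i j \<or> arc j i" if "i \<noteq> j" for i j using that unfolding arc_def by auto
  have anti: "\<not> arc j i" if "arc i j" for i j using that unfolding arc_def by (auto split: if_splits)
  define S where "S i j = PS A i j (if arc i j then [0,1] else [1,0])" for i j
  have Ssub: "S i j \<subseteq> A" for i j unfolding S_def by (rule PS_sub)
  have Scard: "card (S i j) \<le> 2" if "i < j" "j < m" for i j
  proof (cases "arc i j")
    case True then show ?thesis using arcN[of i j] that unfolding S_def by simp
  next
    case False
    then have "arc j i" using total[of i j] that by auto
    then have "card (PS A j i [0,1]) \<le> 2" using arcN[of j i] that by simp
    then show ?thesis using False PS_swap[of A j i 0 1] unfolding S_def by simp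
  qed
  have inS: "x \<in> S (min u v) (max u v)" if "arc u v" "x \<in> A" "x ! u = 0" "x ! v = 1" for u v x
  proof (cases "u < v")
    case True then show ?thesis using that unfolding S_def PS_def by simp
  next
    case False
    then have "v < u" using that(1) unfolding arc_def by auto
    moreover have "\<not> arc v u" using anti that(1) by blast
    ultimately show ?thesis using that unfolding S_def PS_def by simp
  qed
  have pair: "min u v < max u v" "max u v < m" if "u \<noteq> v" "u < m" "v < m" for u v :: nat
    using that by auto
  have Pm_gen: "Pm m B" if key: "\<And>u v x. arc u v \<Longrightarrow> u < m \<Longrightarrow> v < m \<Longrightarrow> x \<in> B \<Longrightarrow> \<not> (x ! u = 0 \<and> x ! v = 1)" for B
  proof (rule Pm_W)
    fix i j assume ij: "i < j" "j < m"
    show "\<exists>w\<in>W. \<forall>x\<in>B. [x ! i, x ! j] \<noteq> w"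
    proof (cases "arc i j")
      case True
      then have "\<forall>x\<in>B. [x ! i, x ! j] \<noteq> [0,1]" using key[of i j] ij by auto
      then show ?thesis unfolding W_def by blast
    next
      case False
      then have "arc j i" using total[of i j] ij by auto
      then have "\<forall>x\<in>B. [x ! i, x ! j] \<noteq> [1,0]" using key[of j i] ij by auto
      then show ?thesis unfolding W_def by blast
    qed
  qed
  have fin: "finite A" using A cols_finite by (rule finite_subset)
  have even: "(m + 2) * 2 ^ m = 2 * ((m + 2) * 2 ^ (m - 1))" using m2
    by (cases m) simp_all
  show ?thesis
  proof (cases "\<exists>i j k. i < m \<and> j < m \<and> k < m \<and> arc i j \<and> arc j k \<and> arc k i")
    case True
    then obtain i j k where ijk: "i < m" "j < m" "k < m" "arc i j" "arc j k" "arc k i" by blast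
    have d: "i \<noteq> j" "j \<noteq> k" "i \<noteq> k" using ijk anti unfolding arc_def by auto
    define U where "U = (\<Union>j<m. \<Union>i<j. S i j)"
    have key: "\<not> (x ! u = 0 \<and> x ! v = 1)" if "arc u v" "u < m" "v < m" "x \<in> A - U" for u v x
    proof
      assume "x ! u = 0 \<and> x ! v = 1"
      then have "x \<in> S (min u v) (max u v)" using inS that by auto
      moreover have "u \<noteq> v" using that(1) unfolding arc_def by simp
      ultimately have "x \<in> U" using pair[of u v] that unfolding U_def by blast
      then show False using that by simp
    qed
    have PmU: "Pm m (A - U)" using Pm_gen key by blast
    have "2 * card (A - U) < (m + 2) * 2 ^ m"
      by (rule loss_cycle[OF PmU _ ijk(1-3) d]) (use A key ijk in auto)
    then have c1: "card (A - U) + 1 \<le> (m + 2) * 2 ^ (m - 1)" using even by linarith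
    have c2: "card A \<le> card (A - U) + (\<Sum>j<m. \<Sum>i<j. card (S i j))" unfolding U_def by (rule remove_card[OF A Ssub])
    have c3: "2 * (\<Sum>j<m. \<Sum>i<j. card (S i j)) \<le> 2 * (m * (m - 1))" by (rule sum_pairs_le) (use Scard in auto)
    show ?thesis using c1 c2 c3 even by linarith
  next
    case False
    have trans: "arc i k" if "i < m" "j < m" "k < m" "arc i j" "arc j k" for i j k
    proof (rule ccontr)
      assume n: "\<not> arc i k"
      have "i \<noteq> k" using that anti by blast
      then have "arc k i" using total n by blast
      then show False using False that by blast
    qed
    have "\<exists>q<m. \<forall>r<m. r \<noteq> q \<longrightarrow> arc r q"
    proof (rule sink_exists)
      show "0 < m" using m2 by simp
      show "arc i j \<or> arc j i" if "i \<noteq> j" for i j using total that by simp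
      show "\<not> arc j i" if "arc i j" for i j using anti that by simp
      show "arc i k" if "i < m" "j < m" "k < m" "arc i j" "arc j k" for i j k by (rule trans[OF that])
    qed
    then obtain q where q: "q < m" "\<forall>r<m. r \<noteq> q \<longrightarrow> arc r q" by blast
    have "\<exists>q<m. \<forall>r<m. r \<noteq> q \<longrightarrow> arc q r"
    proof (rule sink_exists[where R="\<lambda>i j. arc j i"])
      show "0 < m" using m2 by simp
      show "arc j i \<or> arc i j" if "i \<noteq> j" for i j using total that by auto
      show "\<not> arc i j" if "arc j i" for i j using anti that by simp
      show "arc k i" if "i < m" "j < m" "k < m" "arc j i" "arc k j" for i j k by (rule trans[of k j i]) (use that in simp_all)
    qed
    then obtain p where p: "p < m" "\<forall>r<m. r \<noteq> p \<longrightarrow> arc p r" by blast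
    have pq: "p \<noteq> q"
    proof
      assume e: "p = q"
      define r where "r = (if p = 0 then 1 else (0::nat))"
      have r: "r < m" "r \<noteq> p" using m2 unfolding r_def by auto
      have "arc p r" "arc r p" using p(2) q(2) r e by auto
      then show False using anti by blast
    qed
    have apq: "arc p q" using p pq q(1) by blast
    define P0 where "P0 = min p q"
    define Q0 where "Q0 = max p q"
    define E where "E = {x :: nat list. \<forall>r<m. r \<noteq> p \<longrightarrow> r \<noteq> q \<longrightarrow> x ! r = 2}"
    define S' where "S' i j = (if i = P0 \<and> j = Q0 then S i j \<inter> E else S i j)" for i j
    define U where "U = (\<Union>j<m. \<Union>i<j. S' i j)"
    have S'sub: "S' i j \<subseteq> A" for i j unfolding S'_def using Ssub by auto
    have key0: "x \<in> U" if "arc u v" "u < m" "v < m" "x \<in> A" "x ! u = 0" "x ! v = 1" "\<not> (min u v = P0 \<and> max u v = Q0)" for u v x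
    proof -
      have "x \<in> S (min u v) (max u v)" using inS that by auto
      moreover have "S' (min u v) (max u v) = S (min u v) (max u v)" unfolding S'_def by (rule if_not_P[OF that(7)])
      ultimately have "x \<in> S' (min u v) (max u v)" by simp
      moreover have "u \<noteq> v" using that(1) unfolding arc_def by simp
      ultimately show "x \<in> U" using pair[of u v] that unfolding U_def by blast
    qed
    have key: "\<not> (x ! u = 0 \<and> x ! v = 1)" if "arc u v" "u < m" "v < m" "x \<in> A - U" for u v x
    proof
      assume x: "x ! u = 0 \<and> x ! v = 1"
      show False
      proof (cases "min u v = P0 \<and> max u v = Q0")
        case False then show False using key0[of u v x] that x by auto
      next
        case True
        then have uv: "u = p \<and> v = q"
          using that(1) anti apq unfolding P0_def Q0_def by (metis max.commute min.commute min_def max_def)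
        have "x \<in> S (min u v) (max u v)" using inS that x by auto
        moreover have "x \<notin> S' P0 Q0"
        proof
          assume "x \<in> S' P0 Q0"
          then have "x \<in> U" using pq p(1) q(1) unfolding U_def P0_def Q0_def
            by (intro UN_I[of "max p q"] UN_I[of "min p q"]) auto
          then show False using that by simp
        qed
        ultimately have "x \<notin> E" using True unfolding S'_def by simp
        then obtain r where r: "r < m" "r \<noteq> p" "r \<noteq> q" "x ! r \<noteq> 2" unfolding E_def by blast
        have "x ! r < 3" using that(4) A r(1) by (auto intro: cols_nth)
        then have "x ! r = 0 \<or> x ! r = 1" using r(4) by auto
        then show False
        proof
          assume "x ! r = 0"
          then have "x \<in> U" using key0[of r q x] q r that uv x pq by (auto simp: P0_def Q0_def)
          then show False using that by simp
        next
          assume "x ! r = 1"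
          then have "x \<in> U" using key0[of p r x] p r that uv x pq by (auto simp: P0_def Q0_def)
          then show False using that by simp
        qed
      qed
    qed
    have PmU: "Pm m (A - U)" using Pm_gen key by blast
    have c1: "2 * card (A - U) \<le> (m + 2) * 2 ^ m" using Pbound[OF PmU] A by blast
    have c2: "card A \<le> card (A - U) + (\<Sum>j<m. \<Sum>i<j. card (S' i j))" unfolding U_def by (rule remove_card[OF A S'sub])
    have S'card: "card (S' i j) \<le> 2" if "i < j" "j < m" for i j
    proof -
      have "finite (S i j)" using Ssub fin by (rule finite_subset)
      then have "card (S' i j) \<le> card (S i j)" unfolding S'_def by (simp add: card_mono)
      then show ?thesis using Scard that by fastforce
    qed
    have S'1: "card (S' P0 Q0) \<le> 1"
    proof -
      have "finite (S' P0 Q0)" using S'sub fin by (rule finite_subset)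
      moreover have "\<forall>x\<in>S' P0 Q0. \<forall>y\<in>S' P0 Q0. x = y"
      proof (intro ballI)
        fix x y assume x: "x \<in> S' P0 Q0" and y: "y \<in> S' P0 Q0"
        have chr: "z \<in> A \<and> z ! p = 0 \<and> z ! q = 1 \<and> z \<in> E" if "z \<in> S' P0 Q0" for z
        proof (cases "p < q")
          case True
          then show ?thesis using that apq unfolding S'_def S_def PS_def P0_def Q0_def by auto
        next
          case False
          then have "q < p" using pq by simp
          moreover have "\<not> arc q p" using anti apq by blast
          ultimately show ?thesis using that unfolding S'_def S_def PS_def P0_def Q0_def by auto
        qed
        have lx: "length x = m" "length y = m" using chr[OF x] chr[OF y] A unfolding cols_def by auto
        show "x = y"
        proof (rule nth_equalityI)
          show "length x = length y" using lx by simp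
          fix r assume "r < length x"
          then have r: "r < m" using lx by simp
          show "x ! r = y ! r"
          proof (cases "r = p \<or> r = q")
            case True then show ?thesis using chr[OF x] chr[OF y] by auto
          next
            case False then show ?thesis using chr[OF x] chr[OF y] r unfolding E_def by auto
          qed
        qed
      qed
      ultimately show ?thesis using card_le_Suc0_iff_eq by (metis One_nat_def)
    qed
    have c3: "(\<Sum>j<m. \<Sum>i<j. card (S' i j)) + 1 \<le> m * (m - 1)"
      by (rule sum_pairs_le1[where p=P0 and q=Q0]) (use S'card S'1 pq p q in \<open>auto simp: P0_def Q0_def\<close>)
    show ?thesis using c1 c2 c3 by linarith
  qed
qed

lemma avoid: assumes "set F \<subseteq> W" "A \<subseteq> cols m 3" "\<not> config 2 F m A" "i < m" "j < m" "i \<noteq> j"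
  shows "\<exists>w\<in>W. card (PS A i j w) < cntF F w"
proof (rule ccontr)
  assume "\<not> ?thesis"
  then have "\<forall>w\<in>W. cntF F w \<le> card (PS A i j w)" by (simp add: not_less)
  moreover have "finite A" using assms(2) cols_finite by (rule finite_subset)
  ultimately have "config 2 F m A" using imp_config[OF assms(1)] assms(4-6) by blast
  then show False using assms(3) by simp
qed

lemma notin_U: assumes "x \<notin> (\<Union>j<m. \<Union>i<j. S i j)" "i < j" "j < m" shows "x \<notin> S i j"
  using assms by blast

lemma UB_K2: assumes A: "A \<subseteq> cols m 3" and nc: "\<not> config 2 (copies 3 K2) m A"
  shows "2 * card A \<le> (m + 2) * 2 ^ m + 2 * (m * (m - 1))"
proof -
  define S where "S i j = PS A i j (SOME w. w \<in> W \<and> card (PS A i j w) < 3)" for i j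
  define U where "U = (\<Union>j<m. \<Union>i<j. S i j)"
  have ex: "\<exists>w. w \<in> W \<and> card (PS A i j w) < 3" if ij: "i < j" "j < m" for i j
  proof -
    have "i < m" "i \<noteq> j" using ij by auto
    then obtain w where w: "w \<in> W" "card (PS A i j w) < cntF (copies 3 K2) w"
      using avoid[OF K2_W A nc, of i j] ij by blast
    moreover have "cntF (copies 3 K2) w = 3" using w(1) cnt_K2 unfolding W_def by auto
    ultimately show ?thesis by auto
  qed
  have Sw: "(SOME w. w \<in> W \<and> card (PS A i j w) < 3) \<in> W \<and> card (S i j) < 3" if "i < j" "j < m" for i j
    using someI_ex[OF ex[OF that]] unfolding S_def by simp
  have Ssub: "S i j \<subseteq> A" for i j unfolding S_def by (rule PS_sub)
  have Pm: "Pm m (A - U)"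
  proof (rule Pm_W)
    fix i j assume ij: "i < j" "j < m"
    have "\<forall>x\<in>A - U. [x ! i, x ! j] \<noteq> (SOME w. w \<in> W \<and> card (PS A i j w) < 3)"
      using notin_U[where m=m and S=S, OF _ ij] unfolding U_def S_def PS_def by auto
    then show "\<exists>w\<in>W. \<forall>x\<in>A - U. [x ! i, x ! j] \<noteq> w" using Sw[OF ij] by blast
  qed
  have c1: "2 * card (A - U) \<le> (m + 2) * 2 ^ m" using Pbound[OF Pm] A by blast
  have c2: "card A \<le> card (A - U) + (\<Sum>j<m. \<Sum>i<j. card (S i j))" unfolding U_def by (rule remove_card[OF A Ssub])
  have c3: "2 * (\<Sum>j<m. \<Sum>i<j. card (S i j)) \<le> 2 * (m * (m - 1))"
    by (rule sum_pairs_le) (use Sw in fastforce)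
  show ?thesis using c1 c2 c3 by linarith
qed

lemma UB_F: fixes a b c d m :: nat
  assumes "min b c = 3" and "max a d \<le> 2" and m4: "m \<ge> 4"
    and hyp: "2 ^ (m - 2) \<ge> (max b c - 1) * m ^ 2"
    and A: "A \<subseteq> cols m 3" and nc: "\<not> config 2 (Fabcd a b c d) m A"
  shows "2 * card A + 2 \<le> (m + 2) * 2 ^ m + 2 * (m * (m - 1))"
proof -
  define k where "k = max b c"
  have abcd: "a \<le> 2" "d \<le> 2" "3 \<le> b" "3 \<le> c" "b \<le> k" "c \<le> k" "3 \<le> k" "b = 3 \<or> c = 3"
    using assms(1,2) unfolding k_def by (auto simp: min_def max_def split: if_splits)
  define N where "N i j w = card (PS A i j w)" for i j w
  have av: "N i j [0,0] < a \<or> N i j [1,0] < b \<or> N i j [0,1] < c \<or> N i j [1,1] < d"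
    if ij: "i < m" "j < m" "i \<noteq> j" for i j
  proof -
    obtain w where w: "w \<in> W" "card (PS A i j w) < cntF (Fabcd a b c d) w"
      using avoid[OF Fabcd_W A nc ij] by blast
    then show ?thesis using cnt_Fabcd unfolding W_def N_def by auto
  qed
  have Nswap: "N i j [u,v] = N j i [v,u]" for i j u v unfolding N_def by (simp only: PS_swap[of A i j u v])
  have fin: "finite A" using A cols_finite by (rule finite_subset)
  have Ssub: "PS A i j w \<subseteq> A" for i j w by (rule PS_sub)
  have PSnot: "[x ! i, x ! j] \<noteq> w" if "x \<in> A" "x \<notin> PS A i j w" for x i j w
    using that unfolding PS_def by auto
  show ?thesis
  proof (cases "\<exists>i0 j0. i0 < j0 \<and> j0 < m \<and> a \<le> N i0 j0 [0,0] \<and> d \<le> N i0 j0 [1,1] \<and> 3 \<le> N i0 j0 [1,0] \<and> 3 \<le> N i0 j0 [0,1]")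
    case True
    then obtain i0 j0 where ij0: "i0 < j0" "j0 < m" "a \<le> N i0 j0 [0,0]" "d \<le> N i0 j0 [1,1]" "3 \<le> N i0 j0 [1,0]" "3 \<le> N i0 j0 [0,1]"
      by blast
    have av1: "N i0 j0 [1,0] < b \<or> N i0 j0 [0,1] < c" using av[of i0 j0] ij0 by auto
    have av2: "N i0 j0 [0,1] < b \<or> N i0 j0 [1,0] < c" using av[of j0 i0] ij0 Nswap[of j0 i0 0 0] Nswap[of j0 i0 1 0] Nswap[of j0 i0 0 1] Nswap[of j0 i0 1 1] by auto
    have lk: "N i0 j0 [1,0] < k \<and> N i0 j0 [0,1] < k"
    proof (cases "b = 3")
      case True
      then have "N i0 j0 [0,1] < c" "N i0 j0 [1,0] < c" using av1 av2 ij0(5,6) by linarith+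
      then show ?thesis using abcd(6) by linarith
    next
      case False
      then have c3: "c = 3" using abcd(8) by simp
      then have "N i0 j0 [1,0] < b" "N i0 j0 [0,1] < b" using av1 av2 ij0(5,6) by linarith+
      then show ?thesis using abcd(5) by linarith
    qed
    have ex: "\<exists>w. w \<in> W \<and> N i j w < k" if ij: "i < j" "j < m" for i j
    proof -
      have "N i j [0,0] < a \<or> N i j [1,0] < b \<or> N i j [0,1] < c \<or> N i j [1,1] < d" using av[of i j] ij by auto
      moreover have "[0,0] \<in> W" "[1,0] \<in> W" "[0,1] \<in> W" "[1,1] \<in> W" unfolding W_def by auto
      moreover have "a < k" "d < k" using abcd by linarith+
      ultimately show ?thesis using abcd(5,6) by (meson less_trans less_le_trans)
    qed
    define S where "S i j = (if i = i0 \<and> j = j0 then PS A i j [1,0] \<union> PS A i j [0,1] else PS A i j (SOME w. w \<in> W \<and> N i j w < k))" for i j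
    define U where "U = (\<Union>j<m. \<Union>i<j. S i j)"
    have Sw: "(SOME w. w \<in> W \<and> N i j w < k) \<in> W \<and> N i j (SOME w. w \<in> W \<and> N i j w < k) < k" if "i < j" "j < m" for i j
      using someI_ex[OF ex[OF that]] by simp
    have S'sub: "S i j \<subseteq> A" for i j unfolding S_def using Ssub by auto
    have notS: "x \<notin> S i j" if "x \<in> A - U" "i < j" "j < m" for x i j
      using notin_U[where m=m and S=S] that unfolding U_def by blast
    have Pm: "Pm m (A - U)"
    proof (rule Pm_W)
      fix i j assume ij: "i < j" "j < m"
      show "\<exists>w\<in>W. \<forall>x\<in>A - U. [x ! i, x ! j] \<noteq> w"
      proof (cases "i = i0 \<and> j = j0")
        case True
        then have "\<forall>x\<in>A - U. [x ! i, x ! j] \<noteq> [1,0]" using notS[OF _ ij] unfolding S_def PS_def by auto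
        then show ?thesis unfolding W_def by blast
      next
        case False
        then have "\<forall>x\<in>A - U. [x ! i, x ! j] \<noteq> (SOME w. w \<in> W \<and> N i j w < k)"
          using notS[OF _ ij] False unfolding S_def PS_def by auto
        then show ?thesis using Sw[OF ij] by blast
      qed
    qed
    have nopat: "\<forall>x\<in>A - U. \<not> (x ! i0 = 0 \<and> x ! j0 = 1) \<and> \<not> (x ! i0 = 1 \<and> x ! j0 = 0)"
      using notS[OF _ ij0(1,2)] unfolding S_def PS_def by auto
    have c1: "2 * card (A - U) + 2 ^ (m - 1) \<le> (m + 2) * 2 ^ m"
      by (rule loss_pair[OF Pm _ _ ij0(2) _ nopat]) (use A ij0 in auto)
    have c2: "card A \<le> card (A - U) + (\<Sum>j<m. \<Sum>i<j. card (S i j))" unfolding U_def by (rule remove_card[OF A S'sub])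
    have Scard: "card (S i j) \<le> 2 * (k - 1)" if "i < j" "j < m" for i j
    proof (cases "i = i0 \<and> j = j0")
      case True
      then have "card (S i j) \<le> N i j [1,0] + N i j [0,1]" unfolding S_def N_def by (simp add: card_Un_le)
      then show ?thesis using lk True by auto
    next
      case False
      have "card (S i j) = N i j (SOME w. w \<in> W \<and> N i j w < k)" unfolding S_def N_def if_not_P[OF False] by (rule refl)
      then show ?thesis using Sw[OF that] by linarith
    qed
    define K where "K = k - 1"
    define M2 where "M2 = m * (m - 1)"
    have c3: "2 * (\<Sum>j<m. \<Sum>i<j. card (S i j)) \<le> 2 * (K * M2)"
      using sum_pairs_le[where f="\<lambda>i j. card (S i j)" and m=m and h="2 * (k - 1)"] Scard
      unfolding K_def M2_def by (simp add: mult.assoc)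
    have h1: "K * m ^ 2 \<le> 2 ^ (m - 2)" using hyp unfolding K_def k_def by simp
    define m' where "m' = m - 2"
    have m': "m = Suc (Suc m')" using m4 unfolding m'_def by simp
    have h2: "(2::nat) ^ (m - 1) = 2 * 2 ^ (m - 2)" using m' by simp
    have h3: "K * m ^ 2 = K * M2 + K * m" unfolding M2_def using m4
      by (cases m) (simp_all add: power2_eq_square algebra_simps)
    have "0 < K" "0 < m" using abcd(7) m4 unfolding K_def by linarith+
    then have h4: "1 \<le> K * m" by simp
    show ?thesis using c1 c2 c3 h1 h2 h3 h4 unfolding M2_def by linarith
  next
    case False
    then have C2: "N i j [0,0] < a \<or> N i j [1,1] < d \<or> N i j [1,0] < 3 \<or> N i j [0,1] < 3" if "i < j" "j < m" for i j
      using that by (meson not_le)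
    show ?thesis
    proof (cases "\<exists>i0 j0. i0 < j0 \<and> j0 < m \<and> (N i0 j0 [0,0] < a \<or> N i0 j0 [1,1] < d)")
      case True
      then obtain i0 j0 where ij0: "i0 < j0" "j0 < m" "N i0 j0 [0,0] < a \<or> N i0 j0 [1,1] < d" by blast
      define w0 where "w0 = (if N i0 j0 [0,0] < a then [0,0] else [1,1::nat])"
      have w0: "w0 \<in> W" "N i0 j0 w0 \<le> 1" using ij0(3) abcd unfolding w0_def W_def by auto
      have ex: "\<exists>w. w \<in> W \<and> N i j w \<le> 2" if ij: "i < j" "j < m" for i j
      proof -
        have "[0,0] \<in> W" "[1,0] \<in> W" "[0,1] \<in> W" "[1,1] \<in> W" unfolding W_def by auto
        moreover have "N i j [0,0] \<le> 2 \<or> N i j [1,1] \<le> 2 \<or> N i j [1,0] \<le> 2 \<or> N i j [0,1] \<le> 2"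
          using C2[OF ij] abcd(1,2) by linarith
        ultimately show ?thesis by blast
      qed
      define S where "S i j = PS A i j (if i = i0 \<and> j = j0 then w0 else (SOME w. w \<in> W \<and> N i j w \<le> 2))" for i j
      define U where "U = (\<Union>j<m. \<Union>i<j. S i j)"
      have Sw: "(SOME w. w \<in> W \<and> N i j w \<le> 2) \<in> W \<and> N i j (SOME w. w \<in> W \<and> N i j w \<le> 2) \<le> 2" if "i < j" "j < m" for i j
        using someI_ex[OF ex[OF that]] by simp
      have S'sub: "S i j \<subseteq> A" for i j unfolding S_def using Ssub by auto
      have notS: "x \<notin> S i j" if "x \<in> A - U" "i < j" "j < m" for x i j
        using notin_U[where m=m and S=S] that unfolding U_def by blast
      have Pm: "Pm m (A - U)"
      proof (rule Pm_W)
        fix i j assume ij: "i < j" "j < m"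
        define w where "w = (if i = i0 \<and> j = j0 then w0 else (SOME w. w \<in> W \<and> N i j w \<le> 2))"
        have "w \<in> W" unfolding w_def using w0 Sw[OF ij] by simp
        moreover have "\<forall>x\<in>A - U. [x ! i, x ! j] \<noteq> w"
          using notS[OF _ ij] unfolding S_def w_def PS_def by auto
        ultimately show "\<exists>w\<in>W. \<forall>x\<in>A - U. [x ! i, x ! j] \<noteq> w" by blast
      qed
      have c1: "2 * card (A - U) \<le> (m + 2) * 2 ^ m" using Pbound[OF Pm] A by blast
      have c2: "card A \<le> card (A - U) + (\<Sum>j<m. \<Sum>i<j. card (S i j))" unfolding U_def by (rule remove_card[OF A S'sub])
      have c3: "(\<Sum>j<m. \<Sum>i<j. card (S i j)) + 1 \<le> m * (m - 1)"
      proof (rule sum_pairs_le1[where p=i0 and q=j0])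
        show "card (S i j) \<le> 2" if "i < j" "j < m" for i j
          using Sw[OF that] w0 unfolding S_def N_def by auto
        show "card (S i0 j0) \<le> 1" using w0 unfolding S_def N_def by simp
      qed (use ij0 in auto)
      show ?thesis using c1 c2 c3 by linarith
    next
      case False
      have "card (PS A i j [1,0]) \<le> 2 \<or> card (PS A i j [0,1]) \<le> 2" if "i < j" "j < m" for i j
        using C2[OF that] False that unfolding N_def by fastforce
      then show ?thesis using tourn_bound[OF A] m4 by simp
    qed
  qed
qed

lemma cols_Cons: "v # t \<in> cols (Suc n) s \<longleftrightarrow> v < s \<and> t \<in> cols n s"
  unfolding cols_def by auto

lemma card_pred_Suc: "card {x \<in> cols (Suc n) 3. P x} =
   card {t \<in> cols n 3. P (0 # t)} + card {t \<in> cols n 3. P (1 # t)} + card {t \<in> cols n 3. P (2 # t)}"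
proof -
  have "card {x \<in> cols (Suc n) 3. P x} = card (fib n 0 0 {x \<in> cols (Suc n) 3. P x}) + card (fib n 0 1 {x \<in> cols (Suc n) 3. P x}) + card (fib n 0 2 {x \<in> cols (Suc n) 3. P x})"
    by (rule row_split) auto
  moreover have "fib n 0 v {x \<in> cols (Suc n) 3. P x} = {t \<in> cols n 3. P (v # t)}" if "v < 3" for v
    unfolding fib_def ins_def using that by (auto simp: cols_Cons)
  ultimately show ?thesis by simp
qed

lemma card_nocol: assumes "c < 3" shows "card {t \<in> cols n 3. c \<notin> set t} = 2 ^ n"
proof -
  have "{t \<in> cols n 3. c \<notin> set t} = {xs. set xs \<subseteq> {0..<3} - {c} \<and> length xs = n}"
    unfolding cols_def by auto
  moreover have "card ({0..<3} - {c}) = 2" using assms by simp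
  ultimately show ?thesis by (simp add: card_lists_length_eq)
qed

fun Zp :: "nat list \<Rightarrow> bool" where
  "Zp [] = True"
| "Zp (v # t) = ((v = 0 \<longrightarrow> 0 \<notin> set t) \<and> Zp t)"

fun Bp :: "nat list \<Rightarrow> bool" where
  "Bp [] = True"
| "Bp (v # t) = ((v = 0 \<longrightarrow> 1 \<notin> set t) \<and> Bp t)"

lemma Zp_no0: "0 \<notin> set t \<Longrightarrow> Zp t" by (induction t) auto
lemma Bp_no1: "1 \<notin> set t \<Longrightarrow> Bp t" by (induction t) auto

lemma Zp_nth: "Zp x \<Longrightarrow> i < j \<Longrightarrow> j < length x \<Longrightarrow> \<not> (x ! i = 0 \<and> x ! j = 0)"
proof (induction x arbitrary: i j)
  case Nil then show ?case by simp
next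
  case (Cons v t)
  show ?case
  proof (cases i)
    case 0
    then obtain j' where "j = Suc j'" using Cons.prems by (cases j) auto
    then show ?thesis using Cons.prems 0 by (auto simp: in_set_conv_nth)
  next
    case (Suc i')
    then obtain j' where "j = Suc j'" using Cons.prems by (cases j) auto
    then show ?thesis using Cons Suc by auto
  qed
qed

lemma Bp_nth: "Bp x \<Longrightarrow> i < j \<Longrightarrow> j < length x \<Longrightarrow> \<not> (x ! i = 0 \<and> x ! j = 1)"
proof (induction x arbitrary: i j)
  case Nil then show ?case by simp
next
  case (Cons v t)
  show ?case
  proof (cases i)
    case 0
    then obtain j' where "j = Suc j'" using Cons.prems by (cases j) auto
    then show ?thesis using Cons.prems 0 by (auto simp: in_set_conv_nth)
  next
    case (Suc i')
    then obtain j' where "j = Suc j'" using Cons.prems by (cases j) auto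
    then show ?thesis using Cons Suc by auto
  qed
qed

lemma card_Zp: "2 * card {x \<in> cols n 3. Zp x} = (n + 2) * 2 ^ n"
proof (induction n)
  case 0
  have "{x \<in> cols 0 3. Zp x} = {[]}" unfolding cols_def by auto
  then show ?case by simp
next
  case (Suc n)
  have "card {x \<in> cols (Suc n) 3. Zp x} = card {t \<in> cols n 3. 0 \<notin> set t} + card {t \<in> cols n 3. Zp t} + card {t \<in> cols n 3. Zp t}"
  proof -
    have "{t \<in> cols n 3. Zp (0 # t)} = {t \<in> cols n 3. 0 \<notin> set t}" using Zp_no0 by auto
    moreover have "{t \<in> cols n 3. Zp (1 # t)} = {t \<in> cols n 3. Zp t}" "{t \<in> cols n 3. Zp (2 # t)} = {t \<in> cols n 3. Zp t}" by auto
    ultimately show ?thesis using card_pred_Suc[of n Zp] by simp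
  qed
  then show ?case using Suc.IH card_nocol[of 0 n] by (simp add: algebra_simps)
qed

lemma card_Bp: "2 * card {x \<in> cols n 3. Bp x} = (n + 2) * 2 ^ n"
proof (induction n)
  case 0
  have "{x \<in> cols 0 3. Bp x} = {[]}" unfolding cols_def by auto
  then show ?case by simp
next
  case (Suc n)
  have "card {x \<in> cols (Suc n) 3. Bp x} = card {t \<in> cols n 3. 1 \<notin> set t} + card {t \<in> cols n 3. Bp t} + card {t \<in> cols n 3. Bp t}"
  proof -
    have "{t \<in> cols n 3. Bp (0 # t)} = {t \<in> cols n 3. 1 \<notin> set t}" using Bp_no1 by auto
    moreover have "{t \<in> cols n 3. Bp (1 # t)} = {t \<in> cols n 3. Bp t}" "{t \<in> cols n 3. Bp (2 # t)} = {t \<in> cols n 3. Bp t}" by auto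
    ultimately show ?thesis using card_pred_Suc[of n Bp] by simp
  qed
  then show ?case using Suc.IH card_nocol[of 1 n] by (simp add: algebra_simps)
qed

definition Pairs :: "nat \<Rightarrow> (nat \<times> nat) set" where "Pairs m = {(i, j). i < j \<and> j < m}"

lemma Pairs_finite: "finite (Pairs m)"
  by (rule finite_subset[of _ "{..<m} \<times> {..<m}"]) (auto simp: Pairs_def)

lemma card_Pairs: "2 * card (Pairs m) = m * (m - 1)"
proof (induction m)
  case 0 then show ?case by (simp add: Pairs_def)
next
  case (Suc m)
  have "Pairs (Suc m) = Pairs m \<union> (\<lambda>i. (i, m)) ` {..<m}" unfolding Pairs_def by auto
  moreover have "Pairs m \<inter> (\<lambda>i. (i, m)) ` {..<m} = {}" unfolding Pairs_def by auto
  moreover have "card ((\<lambda>i. (i, m)) ` {..<m}) = m" by (simp add: card_image inj_on_def)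
  ultimately have "card (Pairs (Suc m)) = card (Pairs m) + m" using Pairs_finite by (simp add: card_Un_disjoint)
  then show ?case using Suc.IH by (cases m) (simp_all add: algebra_simps)
qed

definition kk :: "nat \<Rightarrow> (nat \<times> nat) \<times> nat \<Rightarrow> nat list" where
  "kk m q = map (\<lambda>r. if r = fst (fst q) \<or> r = snd (fst q) then 0 else Suc (snd q)) [0..<m]"

definition AK :: "nat \<Rightarrow> nat list set" where
  "AK m = {x \<in> cols m 3. Zp x} \<union> kk m ` (Pairs m \<times> {..<2})"

lemma kk_nth: "r < m \<Longrightarrow> kk m ((i, j), s) ! r = (if r = i \<or> r = j then 0 else Suc s)"
  unfolding kk_def by simp

lemma kk_len: "length (kk m q) = m" unfolding kk_def by simp

lemma kk_cols: "s < 2 \<Longrightarrow> kk m ((i, j), s) \<in> cols m 3"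
  unfolding kk_def cols_def by auto

lemma kk_inj: assumes "3 \<le> m" shows "inj_on (kk m) (Pairs m \<times> {..<2})"
proof (rule inj_onI)
  fix x y assume x: "x \<in> Pairs m \<times> {..<2}" and y: "y \<in> Pairs m \<times> {..<2}" and e: "kk m x = kk m y"
  obtain i j s where xd: "x = ((i, j), s)" "i < j" "j < m" "s < 2" using x unfolding Pairs_def by auto
  obtain i' j' s' where yd: "y = ((i', j'), s')" "i' < j'" "j' < m" "s' < 2" using y unfolding Pairs_def by auto
  have z: "(r = i \<or> r = j) \<longleftrightarrow> (r = i' \<or> r = j')" if "r < m" for r
  proof -
    have "kk m ((i, j), s) ! r = kk m ((i', j'), s') ! r" using e xd(1) yd(1) by simp
    then have "(if r = i \<or> r = j then 0 else Suc s) = (if r = i' \<or> r = j' then 0 else (Suc s'::nat))"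
      by (simp only: kk_nth[OF that])
    then show ?thesis by (cases "r = i \<or> r = j"; cases "r = i' \<or> r = j'") simp_all
  qed
  have "i = i' \<or> i = j'" "j = i' \<or> j = j'" "i' = i \<or> i' = j" using z[of i] z[of j] z[of i'] xd yd by auto
  then have ij: "i = i'" "j = j'" using xd yd by auto
  define r where "r = (if 0 \<noteq> i \<and> 0 \<noteq> j then 0 else if 1 \<noteq> i \<and> 1 \<noteq> j then 1 else (2::nat))"
  have r: "r < m" "r \<noteq> i" "r \<noteq> j" using assms xd unfolding r_def by auto
  have "kk m ((i, j), s) ! r = kk m ((i', j'), s') ! r" using e xd(1) yd(1) by simp
  then have "Suc s = Suc s'" using ij r by (simp only: kk_nth[OF r(1)]) simp
  then show "x = y" using xd yd ij by simp
qed

lemma AK_card: assumes "3 \<le> m" shows "2 * card (AK m) = (m + 2) * 2 ^ m + 2 * (m * (m - 1))"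
proof -
  have d: "{x \<in> cols m 3. Zp x} \<inter> kk m ` (Pairs m \<times> {..<2}) = {}"
  proof (rule ccontr)
    assume "\<not> ?thesis"
    then obtain i j s where "((i, j), s) \<in> Pairs m \<times> {..<2}" "Zp (kk m ((i, j), s))" by auto
    then show False using Zp_nth[of "kk m ((i, j), s)" i j] kk_nth[of i m i j s] kk_nth[of j m i j s] kk_len[of m]
      unfolding Pairs_def by auto
  qed
  have f1: "finite {x \<in> cols m 3. Zp x}" using cols_finite by simp
  have f2: "finite (kk m ` (Pairs m \<times> {..<2}))" using Pairs_finite by simp
  have "card (kk m ` (Pairs m \<times> {..<2})) = card (Pairs m) * 2"
    using card_image[OF kk_inj[OF assms]] Pairs_finite by (simp add: card_cartesian_product)
  then show ?thesis unfolding AK_def using card_Un_disjoint[OF f1 f2 d] card_Zp[of m] card_Pairs[of m] by simp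
qed

lemma AK_sub: "AK m \<subseteq> cols m 3" unfolding AK_def using kk_cols by auto

lemma AK_avoid: assumes "i < m" "j < m" "i \<noteq> j" shows "card (PS (AK m) i j [0,0]) \<le> 2"
proof -
  define p where "p = min i j"
  define q where "q = max i j"
  have pq: "p < q" "q < m" using assms unfolding p_def q_def by auto
  have sub: "PS (AK m) i j [0,0] \<subseteq> {kk m ((p, q), 0), kk m ((p, q), 1)}"
  proof
    fix x assume "x \<in> PS (AK m) i j [0,0]"
    then have x: "x \<in> AK m" "x ! i = 0" "x ! j = 0" unfolding PS_def by auto
    have "\<not> (x \<in> cols m 3 \<and> Zp x)"
    proof
      assume "x \<in> cols m 3 \<and> Zp x"
      then have "length x = m" "Zp x" unfolding cols_def by auto
      then show False using Zp_nth[of x p q] x pq unfolding p_def q_def by (auto simp: min_def max_def split: if_splits)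
    qed
    then obtain i' j' s where d: "x = kk m ((i', j'), s)" "i' < j'" "j' < m" "s < 2"
      using x(1) unfolding AK_def Pairs_def by auto
    have z: "r = i' \<or> r = j'" if "r < m" "x ! r = 0" for r
    proof -
      have "kk m ((i', j'), s) ! r = 0" using that d(1) by simp
      then have "(if r = i' \<or> r = j' then 0 else Suc s) = 0" by (simp only: kk_nth[OF that(1)])
      then show ?thesis by (cases "r = i' \<or> r = j'") simp_all
    qed
    have "i = i' \<or> i = j'" "j = i' \<or> j = j'" using z[of i] z[of j] x assms by auto
    then have "i' = p" "j' = q" using d assms unfolding p_def q_def by auto
    moreover have "s = 0 \<or> s = 1" using d by auto
    ultimately show "x \<in> {kk m ((p, q), 0), kk m ((p, q), 1)}" using d by auto
  qed
  have "card (PS (AK m) i j [0,0]) \<le> card {kk m ((p, q), 0), kk m ((p, q), 1)}" by (rule card_mono[OF _ sub]) simp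
  also have "\<dots> \<le> 2" by (simp add: card_insert_le_m1)
  finally show ?thesis .
qed

lemma AK_nc: "\<not> config 2 (copies 3 K2) m (AK m)"
proof
  assume "config 2 (copies 3 K2) m (AK m)"
  moreover have "finite (AK m)" using AK_sub cols_finite by (rule finite_subset)
  ultimately obtain i j where "i < m" "j < m" "i \<noteq> j" "\<forall>w\<in>W. cntF (copies 3 K2) w \<le> card (PS (AK m) i j w)"
    using config_imp[OF K2_W] by blast
  moreover have "[0,0] \<in> W" unfolding W_def by simp
  ultimately have "3 \<le> card (PS (AK m) i j [0,0])" using cnt_K2 by force
  moreover have "card (PS (AK m) i j [0,0]) \<le> 2" using AK_avoid \<open>i < m\<close> \<open>j < m\<close> \<open>i \<noteq> j\<close> by blast
  ultimately show False by linarith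
qed

definition eef :: "nat \<Rightarrow> nat \<Rightarrow> nat \<Rightarrow> nat \<Rightarrow> nat" where
  "eef i j s r = (if s = 0 then (if r = i then 0 else if r = j then 1 else 2)
     else (if r < i then 1 else if r = i then 0 else if r < j then 2 else if r = j then 1 else 0))"

definition ee :: "nat \<Rightarrow> (nat \<times> nat) \<times> nat \<Rightarrow> nat list" where
  "ee m q = map (eef (fst (fst q)) (snd (fst q)) (snd q)) [0..<m]"

definition QI :: "nat \<Rightarrow> ((nat \<times> nat) \<times> nat) set" where
  "QI m = Pairs m \<times> {..<2} - {((0, m - 1), 1)}"

definition AI :: "nat \<Rightarrow> nat list set" where
  "AI m = {x \<in> cols m 3. Bp x} \<union> ee m ` QI m"

lemma ee_nth: "r < m \<Longrightarrow> ee m ((i, j), s) ! r = eef i j s r"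
  unfolding ee_def by simp

lemma ee_len: "length (ee m q) = m" unfolding ee_def by simp

lemma eef_lt: "eef i j s r < 3" unfolding eef_def by auto

lemma ee_cols: "ee m q \<in> cols m 3"
  unfolding ee_def cols_def using eef_lt by auto

lemma eef_ij: "i < j \<Longrightarrow> eef i j s i = 0" "i < j \<Longrightarrow> eef i j s j = 1"
  unfolding eef_def by auto

lemma eef_unique: assumes "i < j" "p < q" "eef i j s p = 0" "eef i j s q = 1" shows "p = i \<and> q = j"
proof (cases "s = 0")
  case True
  then show ?thesis using assms unfolding eef_def by (auto split: if_splits)
next
  case False
  then have p: "p = i \<or> j < p" using assms(3) unfolding eef_def by (auto split: if_splits)
  have q: "q < i \<or> q = j" using False assms(4) unfolding eef_def by (auto split: if_splits)
  show ?thesis using p q assms(1,2) by auto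
qed

lemma eef_diff: assumes "i < j" "j < m" "i \<noteq> 0 \<or> j \<noteq> m - 1"
  shows "\<exists>r<m. eef i j 0 r \<noteq> eef i j 1 r"
proof (cases "i \<noteq> 0")
  case True
  then have "eef i j 0 0 \<noteq> eef i j 1 0" using assms unfolding eef_def by auto
  then show ?thesis using assms by (intro exI[of _ 0]) auto
next
  case False
  then have j: "j < m - 1" using assms by auto
  then have "eef i j 0 (m - 1) \<noteq> eef i j 1 (m - 1)" using assms unfolding eef_def by auto
  then show ?thesis using j by (intro exI[of _ "m - 1"]) auto
qed

lemma ee_inj: "inj_on (ee m) (QI m)"
proof (rule inj_onI)
  fix x y assume x: "x \<in> QI m" and y: "y \<in> QI m" and e: "ee m x = ee m y"
  define i where "i = fst (fst x)"
  define j where "j = snd (fst x)"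
  define s where "s = snd x"
  have xd0: "x = ((i, j), s)" unfolding i_def j_def s_def by simp
  then have xd: "x = ((i, j), s)" "i < j" "j < m" "s < 2" "(i, j, s) \<noteq> (0, m - 1, 1)"
    using x unfolding QI_def Pairs_def by auto
  define i' where "i' = fst (fst y)"
  define j' where "j' = snd (fst y)"
  define s' where "s' = snd y"
  have yd0: "y = ((i', j'), s')" unfolding i'_def j'_def s'_def by simp
  then have yd: "y = ((i', j'), s')" "i' < j'" "j' < m" "s' < 2" "(i', j', s') \<noteq> (0, m - 1, 1)"
    using y unfolding QI_def Pairs_def by auto
  have ev: "eef i j s r = eef i' j' s' r" if "r < m" for r
  proof -
    have "ee m ((i, j), s) ! r = ee m ((i', j'), s') ! r" using e xd(1) yd(1) by simp
    then show ?thesis by (simp only: ee_nth[OF that])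
  qed
  have "eef i' j' s' i = 0" "eef i' j' s' j = 1" using ev[of i] ev[of j] eef_ij[OF xd(2)] xd by auto
  then have ij: "i = i'" "j = j'" using eef_unique[OF yd(2) xd(2)] by auto
  have "s = s'"
  proof (rule ccontr)
    assume ne: "s \<noteq> s'"
    have "i \<noteq> 0 \<or> j \<noteq> m - 1"
    proof (cases "s = 1")
      case True then show ?thesis using xd(5) by auto
    next
      case False then have "s' = 1" using ne xd(4) yd(4) by auto
      then show ?thesis using yd(5) ij by auto
    qed
    then obtain r where r: "r < m" "eef i j 0 r \<noteq> eef i j 1 r" using eef_diff xd(2,3) by blast
    have "eef i j s r = eef i j s' r" using ev[OF r(1)] ij by simp
    moreover have "(s = 0 \<and> s' = 1) \<or> (s = 1 \<and> s' = 0)" using ne xd(4) yd(4) by auto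
    ultimately show False using r(2) by auto
  qed
  then show "x = y" using xd(1) yd(1) ij by simp
qed

lemma QI_card: assumes "2 \<le> m" shows "2 * card (QI m) + 2 = 2 * (m * (m - 1))"
proof -
  have "((0, m - 1), 1::nat) \<in> Pairs m \<times> {..<2}" using assms unfolding Pairs_def by auto
  then have "card (QI m) = card (Pairs m \<times> {..<2::nat}) - 1" unfolding QI_def
    using Pairs_finite by (simp add: card_Diff_singleton)
  moreover have "card (Pairs m \<times> {..<2::nat}) = card (Pairs m) * 2" by (simp add: card_cartesian_product)
  moreover have "card (Pairs m) \<ge> 1" using \<open>((0, m - 1), 1::nat) \<in> Pairs m \<times> {..<2}\<close> Pairs_finite
    by (metis One_nat_def Suc_leI card_gt_0_iff empty_iff mem_Sigma_iff)
  ultimately show ?thesis using card_Pairs[of m] by simp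
qed

lemma AI_sub: "AI m \<subseteq> cols m 3" unfolding AI_def using ee_cols by auto

lemma AI_card: assumes "2 \<le> m" shows "2 * card (AI m) + 2 = (m + 2) * 2 ^ m + 2 * (m * (m - 1))"
proof -
  have d: "{x \<in> cols m 3. Bp x} \<inter> ee m ` QI m = {}"
  proof (rule ccontr)
    assume "\<not> ?thesis"
    then obtain i j s where q: "((i, j), s) \<in> QI m" "Bp (ee m ((i, j), s))" by auto
    then have ij: "i < j" "j < m" unfolding QI_def Pairs_def by auto
    have "ee m ((i, j), s) ! i = 0" "ee m ((i, j), s) ! j = 1" using ee_nth eef_ij ij by auto
    then show False using Bp_nth[OF q(2) ij(1)] ij ee_len by auto
  qed
  have f1: "finite {x \<in> cols m 3. Bp x}" using cols_finite by simp
  have f2: "finite (ee m ` QI m)" unfolding QI_def using Pairs_finite by simp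
  have "card (ee m ` QI m) = card (QI m)" using card_image[OF ee_inj] .
  then show ?thesis unfolding AI_def using card_Un_disjoint[OF f1 f2 d] card_Bp[of m] QI_card[OF assms] by simp
qed

lemma AI_avoid: assumes "p < q" "q < m" shows "card (PS (AI m) p q [0,1]) \<le> 2"
proof -
  have sub: "PS (AI m) p q [0,1] \<subseteq> {ee m ((p, q), 0), ee m ((p, q), 1)}"
  proof
    fix x assume "x \<in> PS (AI m) p q [0,1]"
    then have x: "x \<in> AI m" "x ! p = 0" "x ! q = 1" unfolding PS_def by auto
    have "\<not> (x \<in> cols m 3 \<and> Bp x)"
    proof
      assume "x \<in> cols m 3 \<and> Bp x"
      then have "length x = m" "Bp x" unfolding cols_def by auto
      then show False using Bp_nth[of x p q] x assms by auto
    qed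
    then obtain i' j' s where d: "x = ee m ((i', j'), s)" "i' < j'" "j' < m" "s < 2"
      using x(1) unfolding AI_def QI_def Pairs_def by auto
    have "eef i' j' s p = 0" "eef i' j' s q = 1" using x d(1) ee_nth[of p m i' j' s] ee_nth[of q m i' j' s] assms by auto
    then have "p = i'" "q = j'" using eef_unique[OF d(2) assms(1)] by auto
    moreover have "s = 0 \<or> s = 1" using d by auto
    ultimately show "x \<in> {ee m ((p, q), 0), ee m ((p, q), 1)}" using d by auto
  qed
  have "card (PS (AI m) p q [0,1]) \<le> card {ee m ((p, q), 0), ee m ((p, q), 1)}" by (rule card_mono[OF _ sub]) simp
  also have "\<dots> \<le> 2" by (simp add: card_insert_le_m1)
  finally show ?thesis .
qed

lemma AI_pairs: assumes "i < m" "j < m" "i \<noteq> j"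
  shows "card (PS (AI m) i j [1,0]) \<le> 2 \<or> card (PS (AI m) i j [0,1]) \<le> 2"
proof (cases "i < j")
  case True then show ?thesis using AI_avoid assms by blast
next
  case False
  then have "card (PS (AI m) j i [0,1]) \<le> 2" using AI_avoid assms by simp
  then show ?thesis using PS_swap[of "AI m" i j 1 0] by simp
qed

lemma nc_pairs: assumes "set F \<subseteq> W" "3 \<le> cntF F [1,0]" "3 \<le> cntF F [0,1]" "finite A"
  "\<And>i j. i < m \<Longrightarrow> j < m \<Longrightarrow> i \<noteq> j \<Longrightarrow> card (PS A i j [1,0]) \<le> 2 \<or> card (PS A i j [0,1]) \<le> 2"
  shows "\<not> config 2 F m A"
proof
  assume "config 2 F m A"
  then obtain i j where ij: "i < m" "j < m" "i \<noteq> j" "\<forall>w\<in>W. cntF F w \<le> card (PS A i j w)"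
    using config_imp[OF assms(1,4)] by blast
  moreover have "[1,0] \<in> W" "[0,1] \<in> W" unfolding W_def by auto
  ultimately have "3 \<le> card (PS A i j [1,0])" "3 \<le> card (PS A i j [0,1])" using assms(2,3) by force+
  then show False using assms(5)[OF ij(1-3)] by linarith
qed

lemma AI_fin: "finite (AI m)" using AI_sub cols_finite by (rule finite_subset)

lemma AI_nc_I2: "\<not> config 2 (copies 3 I2) m (AI m)"
proof (rule nc_pairs[OF I2_W _ _ AI_fin AI_pairs])
  show "3 \<le> cntF (copies 3 I2) [1,0]" "3 \<le> cntF (copies 3 I2) [0,1]" using cnt_I2(2,3) by (simp_all only: order_refl)
qed

lemma AI_nc_F: assumes "3 \<le> b" "3 \<le> c" shows "\<not> config 2 (Fabcd a b c d) m (AI m)"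
proof (rule nc_pairs[OF Fabcd_W _ _ AI_fin AI_pairs])
  show "3 \<le> cntF (Fabcd a b c d) [1,0]" "3 \<le> cntF (Fabcd a b c d) [0,1]" using cnt_Fabcd(2,3) assms by (simp_all only:)
qed

lemma forb_eqI: assumes "A0 \<subseteq> cols m 3" "\<not> config 2 F m A0" "card A0 = v"
  "\<And>A. A \<subseteq> cols m 3 \<Longrightarrow> \<not> config 2 F m A \<Longrightarrow> card A \<le> v"
  shows "forb m 3 2 F = v"
  unfolding forb_def
proof (rule Max_eqI)
  have "{card A |A. A \<subseteq> cols m 3 \<and> \<not> config 2 F m A} \<subseteq> card ` Pow (cols m 3)" by auto
  then show "finite {card A |A. A \<subseteq> cols m 3 \<and> \<not> config 2 F m A}"
    by (rule finite_subset) (simp add: cols_finite)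
  show "y \<le> v" if "y \<in> {card A |A. A \<subseteq> cols m 3 \<and> \<not> config 2 F m A}" for y
    using that assms(4) by blast
  show "v \<in> {card A |A. A \<subseteq> cols m 3 \<and> \<not> config 2 F m A}" using assms(1-3) by blast
qed

lemma UB_I2: assumes A: "A \<subseteq> cols m 3" and nc: "\<not> config 2 (copies 3 I2) m A" and m2: "2 \<le> m"
  shows "2 * card A + 2 \<le> (m + 2) * 2 ^ m + 2 * (m * (m - 1))"
proof (rule tourn_bound[OF A m2])
  fix i j assume ij: "i < j" "j < m"
  then have "i < m" "i \<noteq> j" by auto
  then obtain w where w: "w \<in> W" "card (PS A i j w) < cntF (copies 3 I2) w"
    using avoid[OF I2_W A nc] ij(2) by blast
  then have "w = [1,0] \<or> w = [0,1]" using cnt_I2 unfolding W_def by auto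
  then show "card (PS A i j [1,0]) \<le> 2 \<or> card (PS A i j [0,1]) \<le> 2" using w(2) cnt_I2 by auto
qed

theorem mainTheorem11:
  fixes a b c d m :: nat
  assumes "min b c = 3" and "max a d \<le> 2" and "m \<ge> 4"
    and "2 ^ (m - 2) \<ge> (max b c - 1) * m ^ 2"
  shows "forb m 3 2 (Fabcd a b c d) = forb m 3 2 (copies 3 I2)
         \<and> forb m 3 2 (copies 3 I2) = forb m 3 2 (copies 3 K2) - 1"
proof -
  have m2: "2 \<le> m" "3 \<le> m" using assms(3) by auto
  have bc: "3 \<le> b" "3 \<le> c" using assms(1) by (auto simp: min_def split: if_splits)
  have cI: "2 * card (AI m) + 2 = (m + 2) * 2 ^ m + 2 * (m * (m - 1))" using AI_card m2 by blast
  have cK: "2 * card (AK m) = (m + 2) * 2 ^ m + 2 * (m * (m - 1))" using AK_card m2 by blast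
  have fF: "forb m 3 2 (Fabcd a b c d) = card (AI m)"
  proof (rule forb_eqI[OF AI_sub AI_nc_F[OF bc]])
    fix A assume "A \<subseteq> cols m 3" "\<not> config 2 (Fabcd a b c d) m A"
    then have "2 * card A + 2 \<le> (m + 2) * 2 ^ m + 2 * (m * (m - 1))" using UB_F[OF assms] by blast
    then show "card A \<le> card (AI m)" using cI by linarith
  qed simp
  have fI: "forb m 3 2 (copies 3 I2) = card (AI m)"
  proof (rule forb_eqI[OF AI_sub AI_nc_I2])
    fix A assume "A \<subseteq> cols m 3" "\<not> config 2 (copies 3 I2) m A"
    then have "2 * card A + 2 \<le> (m + 2) * 2 ^ m + 2 * (m * (m - 1))" using UB_I2 m2 by blast
    then show "card A \<le> card (AI m)" using cI by linarith
  qed simp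
  have fK: "forb m 3 2 (copies 3 K2) = card (AK m)"
  proof (rule forb_eqI[OF AK_sub AK_nc])
    fix A assume "A \<subseteq> cols m 3" "\<not> config 2 (copies 3 K2) m A"
    then have "2 * card A \<le> (m + 2) * 2 ^ m + 2 * (m * (m - 1))" using UB_K2 by blast
    then show "card A \<le> card (AK m)" using cK by linarith
  qed simp
  have "card (AK m) = card (AI m) + 1" using cI cK by linarith
  then show ?thesis using fF fI fK by simp
qed


end
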